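(* The functions $e_n(x)=\sum_{k=0}^n\binom{n}{k}\frac{(\ln x)^k}{k!}$, $n\ge0$, form an orthonormal basis of $L^2([0,1])$. Furthermore, the operator $J$ on $L^2([0,1])$ defined by $Je_n=e_n$ for $n$ even and $Je_n=-e_n$ for $n$ odd is a unitary monomial operator, and it satisfies $Jx^s=c(s)x^{\tau(s)}$ for all $s\in\mathbb{S}$, where $\tau(s)=\frac{-s}{1+2s}$ and $c(s)=\frac{1}{1+2s}$.
   Context: $\mathbb{S}=\{s\in\mathbb{C}:\operatorname{Re}s>-\tfrac12\}$. A bounded operator $T$ on $L^2([0,1])$ is a monomial operator if for every $s\in\mathbb{S}$ there exist $\tau\in\mathbb{S}$ and $c\in\mathbb{C}$ with $Tx^s=cx^\tau$. *)

theory Defs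
  imports "HOL-Analysis.Analysis"
begin

text \<open>Elements of L^2([0,1]) are represented by complex-valued functions on the reals,
  considered only on [0,1] and up to Lebesgue-a.e. equality.\<close>

definition L2 :: "(real \<Rightarrow> complex) \<Rightarrow> bool" where
  "L2 f \<longleftrightarrow> set_borel_measurable lebesgue {0..1} f
      \<and> set_integrable lebesgue {0..1} (\<lambda>x. (cmod (f x))^2)"

definition l2_inner :: "(real \<Rightarrow> complex) \<Rightarrow> (real \<Rightarrow> complex) \<Rightarrow> complex" where
  "l2_inner f g = (LINT x:{0..1}|lebesgue. cnj (f x) * g x)"

definition l2_norm :: "(real \<Rightarrow> complex) \<Rightarrow> real" where
  "l2_norm f = sqrt (LINT x:{0..1}|lebesgue. (cmod (f x))^2)"

definition l2_eq :: "(real \<Rightarrow> complex) \<Rightarrow> (real \<Rightarrow> complex) \<Rightarrow> bool" where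
  "l2_eq f g \<longleftrightarrow> (AE x in lebesgue. x \<in> {0..1} \<longrightarrow> f x = g x)"

definition l2_orthonormal_basis :: "(nat \<Rightarrow> real \<Rightarrow> complex) \<Rightarrow> bool" where
  "l2_orthonormal_basis e \<longleftrightarrow>
     (\<forall>n. L2 (e n)) \<and>
     (\<forall>m n. l2_inner (e m) (e n) = (if m = n then 1 else 0)) \<and>
     (\<forall>f. L2 f \<longrightarrow> (\<forall>\<epsilon>>0. \<exists>N a. l2_norm (\<lambda>x. f x - (\<Sum>k<N. a k * e k x)) < \<epsilon>))"

definition l2_bounded_op :: "((real \<Rightarrow> complex) \<Rightarrow> (real \<Rightarrow> complex)) \<Rightarrow> bool" where
  "l2_bounded_op T \<longleftrightarrow>
     (\<forall>f. L2 f \<longrightarrow> L2 (T f)) \<and>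
     (\<forall>f g a b. L2 f \<longrightarrow> L2 g \<longrightarrow>
         l2_eq (T (\<lambda>x. a * f x + b * g x)) (\<lambda>x. a * T f x + b * T g x)) \<and>
     (\<exists>C. \<forall>f. L2 f \<longrightarrow> l2_norm (T f) \<le> C * l2_norm f)"

definition l2_unitary :: "((real \<Rightarrow> complex) \<Rightarrow> (real \<Rightarrow> complex)) \<Rightarrow> bool" where
  "l2_unitary T \<longleftrightarrow> l2_bounded_op T \<and>
     (\<forall>f g. L2 f \<longrightarrow> L2 g \<longrightarrow> l2_inner (T f) (T g) = l2_inner f g) \<and>
     (\<forall>g. L2 g \<longrightarrow> (\<exists>f. L2 f \<and> l2_eq (T f) g))"

definition strip_S :: "complex set" where
  "strip_S = {s. Re s > - 1/2}"

definition mon :: "complex \<Rightarrow> real \<Rightarrow> complex" where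
  "mon s x = complex_of_real x powr s"

definition monomial_op :: "((real \<Rightarrow> complex) \<Rightarrow> (real \<Rightarrow> complex)) \<Rightarrow> bool" where
  "monomial_op T \<longleftrightarrow> l2_bounded_op T \<and>
     (\<forall>s\<in>strip_S. \<exists>\<tau>\<in>strip_S. \<exists>c. l2_eq (T (mon s)) (\<lambda>x. c * mon \<tau> x))"

definition e_fun :: "nat \<Rightarrow> real \<Rightarrow> complex" where
  "e_fun n x = complex_of_real (\<Sum>k\<le>n. real (n choose k) * (ln x) ^ k / fact k)"

end

theory Submission
  imports Defs
begin

lemma borel_measurable_cnj'[measurable (raw)]: "f \<in> borel_measurable M \<Longrightarrow> (\<lambda>x. cnj (f x :: complex)) \<in> borel_measurable M"
  by (rule borel_measurable_continuous_on[where f=cnj]) (auto intro: continuous_intros)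

abbreviation I01 :: "real measure" where "I01 \<equiv> lebesgue_on {0..1}"

lemma sets01[simp]: "{0..1::real} \<inter> space lebesgue \<in> sets lebesgue" by simp

lemma fin01: "finite_measure I01"
  by (rule finite_measure_lebesgue_on) auto

lemma meas01_iff: "f \<in> borel_measurable I01 \<longleftrightarrow> (\<lambda>x. indicator {0..1} x *\<^sub>R (f x::complex)) \<in> borel_measurable lebesgue"
proof -
  have e: "(\<lambda>x. indicator {0..1} x *\<^sub>R (f x::complex)) = (\<lambda>x. if x \<in> {0..1} then f x else 0)"
    by (auto simp: indicator_def)
  show ?thesis unfolding e by (subst measurable_restrict_space_iff[where c=0]) auto
qed

lemma L2_iff: "L2 f \<longleftrightarrow> f \<in> borel_measurable I01 \<and> integrable I01 (\<lambda>x. (cmod (f x))^2)"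
  unfolding L2_def set_borel_measurable_def set_integrable_def meas01_iff
  by (simp add: integrable_restrict_space)

lemma inner_iff: "l2_inner f g = integral\<^sup>L I01 (\<lambda>x. cnj (f x) * g x)"
  unfolding l2_inner_def set_lebesgue_integral_def
  by (simp add: integral_restrict_space)

lemma norm_iff: "l2_norm f = sqrt (integral\<^sup>L I01 (\<lambda>x. (cmod (f x))^2))"
  unfolding l2_norm_def set_lebesgue_integral_def
  by (simp add: integral_restrict_space)

lemma eq_iff: "l2_eq f g \<longleftrightarrow> (AE x in I01. f x = g x)"
  unfolding l2_eq_def by (simp add: AE_restrict_space_iff)

lemma L2_meas: "L2 f \<Longrightarrow> f \<in> borel_measurable I01" by (simp add: L2_iff)
lemma L2_sq: "L2 f \<Longrightarrow> integrable I01 (\<lambda>x. (cmod (f x))^2)" by (simp add: L2_iff)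

lemma L2_integrable: assumes "L2 f" shows "integrable I01 f"
proof -
  interpret finite_measure I01 by (rule fin01)
  have "integrable I01 (\<lambda>x. 1 + (cmod (f x))^2)" using L2_sq[OF assms] by auto
  then show ?thesis
  proof (rule Bochner_Integration.integrable_bound)
    show "f \<in> borel_measurable I01" using L2_meas[OF assms] .
    show "AE x in I01. norm (f x) \<le> norm (1 + (cmod (f x))^2)"
    proof (rule AE_I2)
      fix x
      have "0 \<le> (cmod (f x) - 1)^2" by simp
      then have "cmod (f x) \<le> 1 + (cmod (f x))^2"
        by (simp add: power2_eq_square algebra_simps) (smt (verit) norm_ge_zero)
      then show "norm (f x) \<le> norm (1 + (cmod (f x))^2)" by simp
    qed
  qed
qed

lemma norm_prod_le: "cmod (cnj a * b) \<le> (cmod a)^2 + (cmod b)^2"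
proof -
  have "cmod (cnj a * b) = cmod a * cmod b" by (simp add: norm_mult)
  also have "\<dots> \<le> (cmod a)^2 + (cmod b)^2"
    using sum_squares_bound[of "cmod a" "cmod b"] mult_nonneg_nonneg[OF norm_ge_zero[of a] norm_ge_zero[of b]] by linarith
  finally show ?thesis .
qed

lemma L2_prod: assumes "L2 f" "L2 g" shows "integrable I01 (\<lambda>x. cnj (f x) * g x)"
proof -
  have "integrable I01 (\<lambda>x. (cmod (f x))^2 + (cmod (g x))^2)" using L2_sq assms by auto
  then show ?thesis
  proof (rule Bochner_Integration.integrable_bound)
    have [measurable]: "f \<in> borel_measurable I01" "g \<in> borel_measurable I01" using L2_meas assms by auto
    show "(\<lambda>x. cnj (f x) * g x) \<in> borel_measurable I01" by measurable
    show "AE x in I01. norm (cnj (f x) * g x) \<le> norm ((cmod (f x))^2 + (cmod (g x))^2)"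
      using norm_prod_le by (intro AE_I2) simp
  qed
qed

lemma L2_prod': assumes "L2 f" "L2 g" shows "integrable I01 (\<lambda>x. f x * g x)"
proof -
  have "integrable I01 (\<lambda>x. (cmod (f x))^2 + (cmod (g x))^2)" using L2_sq assms by auto
  then show ?thesis
  proof (rule Bochner_Integration.integrable_bound)
    have [measurable]: "f \<in> borel_measurable I01" "g \<in> borel_measurable I01" using L2_meas assms by auto
    show "(\<lambda>x. f x * g x) \<in> borel_measurable I01" by measurable
    show "AE x in I01. norm (f x * g x) \<le> norm ((cmod (f x))^2 + (cmod (g x))^2)"
      using norm_prod_le[of "cnj (f _)"] by (intro AE_I2) simp
  qed
qed

lemma L2_lin: assumes "L2 f" "L2 g" shows "L2 (\<lambda>x. a * f x + b * g x)"
  unfolding L2_iff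
proof
  show "(\<lambda>x. a * f x + b * g x) \<in> borel_measurable I01" using L2_meas[OF assms(1)] L2_meas[OF assms(2)] by measurable
  have i: "integrable I01 (\<lambda>x. 2 * (cmod a)^2 * (cmod (f x))^2 + 2 * (cmod b)^2 * (cmod (g x))^2)"
    using L2_sq assms by auto
  show "integrable I01 (\<lambda>x. (cmod (a * f x + b * g x))^2)"
  proof (rule Bochner_Integration.integrable_bound[OF i])
    show "(\<lambda>x. (cmod (a * f x + b * g x))^2) \<in> borel_measurable I01" using L2_meas[OF assms(1)] L2_meas[OF assms(2)] by measurable
    show "AE x in I01. norm ((cmod (a * f x + b * g x))^2) \<le> norm (2 * (cmod a)^2 * (cmod (f x))^2 + 2 * (cmod b)^2 * (cmod (g x))^2)"
    proof (rule AE_I2)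
      fix x
      have t: "cmod (a * f x + b * g x) \<le> cmod a * cmod (f x) + cmod b * cmod (g x)"
        by (metis norm_mult norm_triangle_ineq)
      have "(cmod (a * f x + b * g x))^2 \<le> (cmod a * cmod (f x) + cmod b * cmod (g x))^2"
        using t by (simp add: power_mono)
      also have "\<dots> \<le> 2 * (cmod a * cmod (f x))^2 + 2 * (cmod b * cmod (g x))^2"
        using sum_squares_bound[of "cmod a * cmod (f x)" "cmod b * cmod (g x)"]
        by (simp add: power2_sum)
      also have "\<dots> = 2 * (cmod a)^2 * (cmod (f x))^2 + 2 * (cmod b)^2 * (cmod (g x))^2"
        by (simp add: power_mult_distrib)
      finally show "norm ((cmod (a * f x + b * g x))^2) \<le> norm (2 * (cmod a)^2 * (cmod (f x))^2 + 2 * (cmod b)^2 * (cmod (g x))^2)"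
        by simp
    qed
  qed
qed

lemma L2_zero: "L2 (\<lambda>x. 0)"
  unfolding L2_iff by simp

lemma L2_const: "L2 (\<lambda>x. c)"
proof -
  interpret finite_measure I01 by (rule fin01)
  show ?thesis unfolding L2_iff by simp
qed

lemma L2_cmult: "L2 f \<Longrightarrow> L2 (\<lambda>x. a * f x)"
  using L2_lin[of f f a 0] by simp

lemma L2_add: "L2 f \<Longrightarrow> L2 g \<Longrightarrow> L2 (\<lambda>x. f x + g x)"
  using L2_lin[of f g 1 1] by simp

lemma L2_diff: "L2 f \<Longrightarrow> L2 g \<Longrightarrow> L2 (\<lambda>x. f x - g x)"
  using L2_lin[of f g 1 "-1"] by simp

lemma L2_sum: "finite A \<Longrightarrow> (\<And>n. n \<in> A \<Longrightarrow> L2 (g n)) \<Longrightarrow> L2 (\<lambda>x. \<Sum>n\<in>A. c n * g n x)"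
proof (induction A rule: finite_induct)
  case empty then show ?case using L2_zero by simp
next
  case (insert a A)
  then show ?case using L2_lin[of "g a" "\<lambda>x. \<Sum>n\<in>A. c n * g n x" "c a" 1] by simp
qed

lemma L2_cong: "L2 f \<Longrightarrow> f \<in> borel_measurable I01 \<Longrightarrow> g \<in> borel_measurable I01 \<Longrightarrow> (AE x in I01. f x = g x) \<Longrightarrow> L2 g"
  unfolding L2_iff
proof (elim conjE, intro conjI)
  assume a: "integrable I01 (\<lambda>x. (cmod (f x))^2)" "f \<in> borel_measurable I01" "g \<in> borel_measurable I01"
    "AE x in I01. f x = g x"
  show "g \<in> borel_measurable I01" by fact
  have "integrable I01 (\<lambda>x. (cmod (f x))^2) = integrable I01 (\<lambda>x. (cmod (g x))^2)"
    by (rule integrable_cong_AE) (use a in \<open>auto elim: AE_mp\<close>)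
  then show "integrable I01 (\<lambda>x. (cmod (g x))^2)" using a by simp
qed


lemma cnj_mult_self: "cnj z * z = complex_of_real ((cmod z)^2)"
  by (metis complex_norm_square mult.commute)
lemma sqn: "(complex_of_real (cmod z))^2 = z * cnj z"
  by (metis complex_norm_square of_real_power)

lemma ip_lin2: assumes "L2 f" "L2 g" "L2 h"
  shows "l2_inner f (\<lambda>x. a * g x + b * h x) = a * l2_inner f g + b * l2_inner f h"
proof -
  have "(\<lambda>x. cnj (f x) * (a * g x + b * h x)) = (\<lambda>x. a * (cnj (f x) * g x) + b * (cnj (f x) * h x))"
    by (auto simp: algebra_simps)
  then show ?thesis unfolding inner_iff
    using L2_prod[OF assms(1,2)] L2_prod[OF assms(1,3)] by simp
qed

lemma ip_cnj: "l2_inner g f = cnj (l2_inner f g)"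
proof -
  have "cnj (integral\<^sup>L I01 (\<lambda>x. cnj (f x) * g x)) = integral\<^sup>L I01 (\<lambda>x. cnj (cnj (f x) * g x))"
    by (simp only: Bochner_Integration.integral_cnj)
  then show ?thesis unfolding inner_iff by (simp add: mult.commute)
qed

lemma ip_lin1: assumes "L2 f" "L2 g" "L2 h"
  shows "l2_inner (\<lambda>x. a * g x + b * h x) f = cnj a * l2_inner g f + cnj b * l2_inner h f"
  by (subst ip_cnj, subst ip_lin2[OF assms]) (simp add: ip_cnj[of f g] ip_cnj[of f h])

lemma nrm_sq: "(l2_norm f)^2 = integral\<^sup>L I01 (\<lambda>x. (cmod (f x))^2)"
  unfolding norm_iff by (simp add: integral_nonneg_AE)

lemma nrm_nonneg: "0 \<le> l2_norm f" unfolding norm_iff by simp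

lemma ip_self: "l2_inner f f = complex_of_real ((l2_norm f)^2)"
proof -
  have "(\<lambda>x. cnj (f x) * f x) = (\<lambda>x. complex_of_real ((cmod (f x))^2))"
    by (simp add: cnj_mult_self)
  then show ?thesis unfolding inner_iff nrm_sq by (simp only: integral_complex_of_real)
qed

lemma nrm_zero_AE: assumes "L2 f" "l2_norm f = 0" shows "AE x in I01. f x = 0"
proof -
  have "integral\<^sup>L I01 (\<lambda>x. (cmod (f x))^2) = 0" using assms(2) nrm_sq[of f] by simp
  then have "AE x in I01. (cmod (f x))^2 = 0"
    using integral_nonneg_eq_0_iff_AE[of I01 "\<lambda>x. (cmod (f x))^2"] L2_sq[OF assms(1)] by simp
  then show ?thesis by simp
qed

lemma AE_zero_nrm: assumes "f \<in> borel_measurable I01" "AE x in I01. f x = 0" shows "l2_norm f = 0"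
proof -
  have "integral\<^sup>L I01 (\<lambda>x. (cmod (f x))^2) = integral\<^sup>L I01 (\<lambda>x. 0)"
    by (rule integral_cong_AE) (use assms in \<open>auto elim: AE_mp\<close>)
  then show ?thesis unfolding norm_iff by simp
qed

lemma AE_zero_ip: assumes "f \<in> borel_measurable I01" "g \<in> borel_measurable I01" "AE x in I01. f x = 0" shows "l2_inner f g = 0"
proof -
  have "integral\<^sup>L I01 (\<lambda>x. cnj (f x) * g x) = integral\<^sup>L I01 (\<lambda>x. 0)"
    by (rule integral_cong_AE) (use assms in \<open>auto elim: AE_mp\<close>)
  then show ?thesis unfolding inner_iff by simp
qed

lemma CS: assumes "L2 f" "L2 g" shows "cmod (l2_inner f g) \<le> l2_norm f * l2_norm g"
proof (cases "l2_norm f = 0 \<or> l2_norm g = 0")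
  case True
  then show ?thesis
  proof
    assume "l2_norm f = 0"
    then show ?thesis using AE_zero_ip[OF L2_meas[OF assms(1)] L2_meas[OF assms(2)] nrm_zero_AE[OF assms(1)]] nrm_nonneg by simp
  next
    assume "l2_norm g = 0"
    then show ?thesis using AE_zero_ip[OF L2_meas[OF assms(2)] L2_meas[OF assms(1)] nrm_zero_AE[OF assms(2)]] ip_cnj[of g f] nrm_nonneg by simp
  qed
next
  case False
  define A where "A = l2_norm f" define B where "B = l2_norm g"
  have A: "A > 0" and B: "B > 0" using False nrm_nonneg A_def B_def by (auto simp: order_le_less)
  define t where "t = B / A"
  have t: "t > 0" using A B t_def by simp
  have i1: "integrable I01 (\<lambda>x. cmod (cnj (f x) * g x))" using L2_prod[OF assms] by simp
  have i2: "integrable I01 (\<lambda>x. (t * (cmod (f x))^2 + (cmod (g x))^2 / t) / 2)"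
    using L2_sq assms by auto
  have pt: "cmod (cnj (f x) * g x) \<le> (t * (cmod (f x))^2 + (cmod (g x))^2 / t) / 2" for x
  proof -
    have "0 \<le> (sqrt t * cmod (f x) - cmod (g x) / sqrt t)^2" by simp
    also have "\<dots> = t * (cmod (f x))^2 + (cmod (g x))^2 / t - 2 * cmod (f x) * cmod (g x)"
      using t by (simp add: power2_diff power_mult_distrib power_divide field_simps)
    finally show ?thesis by (simp add: norm_mult)
  qed
  have "cmod (l2_inner f g) \<le> integral\<^sup>L I01 (\<lambda>x. cmod (cnj (f x) * g x))"
    unfolding inner_iff by (rule integral_norm_bound)
  also have "\<dots> \<le> integral\<^sup>L I01 (\<lambda>x. (t * (cmod (f x))^2 + (cmod (g x))^2 / t) / 2)"
    by (rule integral_mono[OF i1 i2 pt])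
  also have "\<dots> = (t * A^2 + B^2 / t) / 2"
    using L2_sq assms unfolding A_def B_def nrm_sq by simp
  also have "\<dots> = A * B" using A B unfolding t_def by (simp add: field_simps power2_eq_square)
  finally show ?thesis unfolding A_def B_def .
qed

lemma nrm_sq_expand: assumes "L2 f" "L2 g"
  shows "(l2_norm (\<lambda>x. a * f x + b * g x))^2 = (cmod a)^2 * (l2_norm f)^2 + (cmod b)^2 * (l2_norm g)^2
     + 2 * Re (cnj a * b * l2_inner f g)"
proof -
  have L: "L2 (\<lambda>x. a * f x + b * g x)" using L2_lin assms by blast
  have "complex_of_real ((l2_norm (\<lambda>x. a * f x + b * g x))^2) = l2_inner (\<lambda>x. a * f x + b * g x) (\<lambda>x. a * f x + b * g x)"
    by (simp add: ip_self)
  also have "\<dots> = cnj a * l2_inner f (\<lambda>x. a * f x + b * g x) + cnj b * l2_inner g (\<lambda>x. a * f x + b * g x)"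
    by (rule ip_lin1[OF L assms])
  also have "\<dots> = cnj a * (a * l2_inner f f + b * l2_inner f g) + cnj b * (a * l2_inner g f + b * l2_inner g g)"
    by (simp add: ip_lin2 assms)
  also have "\<dots> = (cmod a)^2 * l2_inner f f + (cmod b)^2 * l2_inner g g + (cnj a * b * l2_inner f g + cnj (cnj a * b * l2_inner f g))"
    by (simp add: ip_cnj[of g f] sqn algebra_simps)
  also have "\<dots> = complex_of_real ((cmod a)^2 * (l2_norm f)^2 + (cmod b)^2 * (l2_norm g)^2
     + 2 * Re (cnj a * b * l2_inner f g))"
    by (simp only: ip_self complex_add_cnj) simp
  finally show ?thesis by (simp only: of_real_eq_iff)
qed

lemma nrm_triangle: assumes "L2 f" "L2 g"
  shows "l2_norm (\<lambda>x. f x + g x) \<le> l2_norm f + l2_norm g"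
proof -
  have "(l2_norm (\<lambda>x. f x + g x))^2 = (l2_norm f)^2 + (l2_norm g)^2 + 2 * Re (l2_inner f g)"
    using nrm_sq_expand[OF assms, of 1 1] by simp
  also have "\<dots> \<le> (l2_norm f)^2 + (l2_norm g)^2 + 2 * (l2_norm f * l2_norm g)"
    using CS[OF assms] complex_Re_le_cmod[of "l2_inner f g"] by linarith
  also have "\<dots> = (l2_norm f + l2_norm g)^2" by (simp add: power2_sum)
  finally show ?thesis using nrm_nonneg
    by (meson add_nonneg_nonneg power2_le_imp_le)
qed

lemma nrm_cmult: "l2_norm (\<lambda>x. c * f x) = cmod c * l2_norm f"
proof -
  have "integral\<^sup>L I01 (\<lambda>x. (cmod (c * f x))^2) = (cmod c)^2 * integral\<^sup>L I01 (\<lambda>x. (cmod (f x))^2)"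
    by (simp add: norm_mult power_mult_distrib)
  then show ?thesis unfolding norm_iff by (simp add: real_sqrt_mult)
qed

lemma nrm_minus: "l2_norm (\<lambda>x. - f x) = l2_norm f"
  using nrm_cmult[of "-1" f] by simp

lemma nrm_diff_commute: "l2_norm (\<lambda>x. f x - g x) = l2_norm (\<lambda>x. g x - f x)"
  using nrm_minus[of "\<lambda>x. g x - f x"] by simp

lemma nrm_triangle_diff: assumes "L2 f" "L2 g" "L2 h"
  shows "l2_norm (\<lambda>x. f x - h x) \<le> l2_norm (\<lambda>x. f x - g x) + l2_norm (\<lambda>x. g x - h x)"
  using nrm_triangle[OF L2_diff[OF assms(1,2)] L2_diff[OF assms(2,3)]] by simp

lemma nrm_cong_AE: assumes "f \<in> borel_measurable I01" "g \<in> borel_measurable I01" "AE x in I01. f x = g x" shows "l2_norm f = l2_norm g"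
proof -
  have "integral\<^sup>L I01 (\<lambda>x. (cmod (f x))^2) = integral\<^sup>L I01 (\<lambda>x. (cmod (g x))^2)"
    by (rule integral_cong_AE) (use assms in \<open>auto elim: AE_mp\<close>)
  then show ?thesis unfolding norm_iff by simp
qed

lemma ip_cong_AE2: assumes "f \<in> borel_measurable I01" "g \<in> borel_measurable I01" "h \<in> borel_measurable I01" "AE x in I01. f x = g x" shows "l2_inner h f = l2_inner h g"
proof -
  have "integral\<^sup>L I01 (\<lambda>x. cnj (h x) * f x) = integral\<^sup>L I01 (\<lambda>x. cnj (h x) * g x)"
    by (rule integral_cong_AE) (use assms in \<open>auto elim: AE_mp\<close>)
  then show ?thesis unfolding inner_iff by simp
qed

lemma ip_cong_AE1: assumes "f \<in> borel_measurable I01" "g \<in> borel_measurable I01" "h \<in> borel_measurable I01" "AE x in I01. f x = g x" shows "l2_inner f h = l2_inner g h"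
  using ip_cong_AE2[OF assms] ip_cnj by metis

lemma ip_diff_bound: assumes "L2 f" "L2 g" "L2 h"
  shows "cmod (l2_inner h f - l2_inner h g) \<le> l2_norm h * l2_norm (\<lambda>x. f x - g x)"
proof -
  have "l2_inner h f - l2_inner h g = l2_inner h (\<lambda>x. 1 * f x + (-1) * g x)"
    using ip_lin2[OF assms(3,1,2), of 1 "-1"] by simp
  then show ?thesis using CS[OF assms(3) L2_diff[OF assms(1,2)]] by simp
qed


lemma measure_I01: "measure I01 (space I01) = 1"
  by (simp add: measure_restrict_space)

lemma L1_le_L2: assumes "L2 h" shows "integral\<^sup>L I01 (\<lambda>x. cmod (h x)) \<le> l2_norm h"
proof -
  interpret finite_measure I01 by (rule fin01)
  have L: "L2 (\<lambda>x. complex_of_real (cmod (h x)))"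
    using L2_meas[OF assms] L2_sq[OF assms] unfolding L2_iff by simp measurable
  have n1: "l2_norm (\<lambda>x. 1) = 1" unfolding norm_iff using measure_I01 by simp
  have n2: "l2_norm (\<lambda>x. complex_of_real (cmod (h x))) = l2_norm h" unfolding norm_iff by simp
  have "l2_inner (\<lambda>x. 1) (\<lambda>x. complex_of_real (cmod (h x))) = complex_of_real (integral\<^sup>L I01 (\<lambda>x. cmod (h x)))"
    unfolding inner_iff by simp
  then have "cmod (complex_of_real (integral\<^sup>L I01 (\<lambda>x. cmod (h x)))) \<le> 1 * l2_norm h"
    using CS[OF L2_const L] n1 n2 by metis
  then show ?thesis by simp
qed

lemma RF:
  assumes s: "\<And>n. L2 (s n)"
    and cau: "\<And>e. e > 0 \<Longrightarrow> \<exists>N. \<forall>m\<ge>N. \<forall>n\<ge>N. l2_norm (\<lambda>x. s m x - s n x) < e"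
  shows "\<exists>g. L2 g \<and> (\<lambda>n. l2_norm (\<lambda>x. s n x - g x)) \<longlonglongrightarrow> 0"
proof -
  have [measurable]: "\<And>n. s n \<in> borel_measurable I01" using s L2_meas by auto
  have int: "\<And>n. integrable I01 (s n)" using s L2_integrable by auto
  have "\<exists>N. \<forall>i\<ge>N. \<forall>j\<ge>N. LINT x|I01. norm (s i x - s j x) < e" if e: "e > 0" for e
  proof -
    obtain N where N: "\<forall>m\<ge>N. \<forall>n\<ge>N. l2_norm (\<lambda>x. s m x - s n x) < e" using cau[OF e] by blast
    show ?thesis
      using N L1_le_L2[OF L2_diff[OF s s]] by (meson order.strict_trans1)
  qed
  note c = cauchy_L1_AE_cauchy_subseq[of I01 s, OF int this]
  obtain r where r: "strict_mono r" and ae: "AE x in I01. Cauchy (\<lambda>i. s (r i) x)"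
    by (rule c) blast
  define g where "g x = lim (\<lambda>i. s (r i) x)" for x
  have [measurable]: "g \<in> borel_measurable I01" unfolding g_def by measurable
  have lim: "AE x in I01. (\<lambda>i. s (r i) x) \<longlonglongrightarrow> g x"
    using ae unfolding g_def by eventually_elim (simp add: Cauchy_convergent_iff convergent_LIMSEQ_iff)
  have key: "\<exists>N. \<forall>n\<ge>N. L2 (\<lambda>x. s n x - g x) \<and> l2_norm (\<lambda>x. s n x - g x) \<le> e" if e: "e > 0" for e
  proof -
    obtain N where N: "\<forall>m\<ge>N. \<forall>n\<ge>N. l2_norm (\<lambda>x. s m x - s n x) < e" using cau[OF e] by blast
    have "L2 (\<lambda>x. s n x - g x) \<and> l2_norm (\<lambda>x. s n x - g x) \<le> e" if n: "n \<ge> N" for n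
    proof -
      define u where "u i x = ennreal ((cmod (s n x - s (r i) x))^2)" for i x
      have [measurable]: "\<And>i. u i \<in> borel_measurable I01" unfolding u_def by measurable
      have "AE x in I01. liminf (\<lambda>i. u i x) = ennreal ((cmod (s n x - g x))^2)"
        using lim
      proof eventually_elim
        case (elim x)
        have "(\<lambda>i. u i x) \<longlonglongrightarrow> ennreal ((cmod (s n x - g x))^2)"
          unfolding u_def by (intro tendsto_ennrealI tendsto_intros elim)
        then show ?case by (simp add: lim_imp_Liminf)
      qed
      then have "(\<integral>\<^sup>+x. ennreal ((cmod (s n x - g x))^2) \<partial>I01) = (\<integral>\<^sup>+x. liminf (\<lambda>i. u i x) \<partial>I01)"
        by (intro nn_integral_cong_AE) (auto elim: AE_mp)
      also have "\<dots> \<le> liminf (\<lambda>i. integral\<^sup>N I01 (u i))"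
        by (rule nn_integral_liminf) simp
      also have "\<dots> \<le> ennreal (e^2)"
      proof (rule Liminf_le)
        show "\<forall>\<^sub>F i in sequentially. integral\<^sup>N I01 (u i) \<le> ennreal (e^2)"
        proof (rule eventually_sequentiallyI[of N])
          fix i assume i: "N \<le> i"
          have ri: "r i \<ge> N" using i r seq_suble[OF r, of i] by linarith
          have "integral\<^sup>N I01 (u i) = ennreal ((l2_norm (\<lambda>x. s n x - s (r i) x))^2)"
            unfolding u_def nrm_sq
            by (rule nn_integral_eq_integral) (use L2_sq[OF L2_diff[OF s s]] in auto)
          also have "\<dots> \<le> ennreal (e^2)"
            using N n ri nrm_nonneg by (intro ennreal_leI power_mono) (auto simp: less_imp_le)
          finally show "integral\<^sup>N I01 (u i) \<le> ennreal (e^2)" .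
        qed
      qed simp
      finally have fin: "(\<integral>\<^sup>+x. ennreal ((cmod (s n x - g x))^2) \<partial>I01) \<le> ennreal (e^2)" .
      have i2: "integrable I01 (\<lambda>x. (cmod (s n x - g x))^2)"
        by (rule integrableI_bounded) (use fin in \<open>auto simp: top.not_eq_extremum intro: le_less_trans\<close>)
      have L: "L2 (\<lambda>x. s n x - g x)" unfolding L2_iff using i2 by simp
      have "ennreal ((l2_norm (\<lambda>x. s n x - g x))^2) = (\<integral>\<^sup>+x. ennreal ((cmod (s n x - g x))^2) \<partial>I01)"
        unfolding nrm_sq by (rule nn_integral_eq_integral[symmetric]) (use i2 in auto)
      then have "ennreal ((l2_norm (\<lambda>x. s n x - g x))^2) \<le> ennreal (e^2)" using fin by simp
      then have "(l2_norm (\<lambda>x. s n x - g x))^2 \<le> e^2" using e by (simp add: ennreal_le_iff)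
      then have "l2_norm (\<lambda>x. s n x - g x) \<le> e" using e nrm_nonneg power2_le_imp_le by (metis less_imp_le)
      with L show ?thesis by simp
    qed
    then show ?thesis by blast
  qed
  obtain N where "\<forall>n\<ge>N. L2 (\<lambda>x. s n x - g x) \<and> l2_norm (\<lambda>x. s n x - g x) \<le> 1" using key[of 1] by auto
  then have "L2 (\<lambda>x. s N x - (s N x - g x))" using L2_diff s by blast
  then have Lg: "L2 g" by simp
  have "(\<lambda>n. l2_norm (\<lambda>x. s n x - g x)) \<longlonglongrightarrow> 0"
  proof (rule LIMSEQ_I)
    fix e :: real assume e: "0 < e"
    obtain N where "\<forall>n\<ge>N. L2 (\<lambda>x. s n x - g x) \<and> l2_norm (\<lambda>x. s n x - g x) \<le> e/2" using key[of "e/2"] e by auto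
    then show "\<exists>no. \<forall>n\<ge>no. norm (l2_norm (\<lambda>x. s n x - g x) - 0) < e"
      using e nrm_nonneg by (auto intro!: exI[of _ N] simp: abs_of_nonneg)
  qed
  with Lg show ?thesis by blast
qed


lemma I01_lborel:
  fixes f :: "real \<Rightarrow> 'b::{banach, second_countable_topology}"
  assumes [measurable]: "f \<in> borel_measurable borel"
  shows "integrable I01 f \<longleftrightarrow> set_integrable lborel {0<..<1} f"
    and "integral\<^sup>L I01 f = set_lebesgue_integral lborel {0<..<1} f"
proof -
  have ae: "AE x in lborel. indicator {0..1} x *\<^sub>R f x = indicator {0<..<1} x *\<^sub>R f x"
    using AE_lborel_singleton[of 0] AE_lborel_singleton[of 1]
    by eventually_elim (auto simp: indicator_def)
  have "integrable I01 f \<longleftrightarrow> integrable lebesgue (\<lambda>x. indicator {0..1} x *\<^sub>R f x)"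
    by (simp add: integrable_restrict_space)
  also have "\<dots> \<longleftrightarrow> integrable lborel (\<lambda>x. indicator {0..1} x *\<^sub>R f x)"
    by (rule integrable_completion) measurable
  also have "\<dots> \<longleftrightarrow> integrable lborel (\<lambda>x. indicator {0<..<1} x *\<^sub>R f x)"
    by (rule integrable_cong_AE) (use ae in auto)
  finally show "integrable I01 f \<longleftrightarrow> set_integrable lborel {0<..<1} f"
    unfolding set_integrable_def .
  have "integral\<^sup>L I01 f = integral\<^sup>L lebesgue (\<lambda>x. indicator {0..1} x *\<^sub>R f x)"
    by (simp add: integral_restrict_space)
  also have "\<dots> = integral\<^sup>L lborel (\<lambda>x. indicator {0..1} x *\<^sub>R f x)"
    by (rule integral_completion) measurable
  also have "\<dots> = integral\<^sup>L lborel (\<lambda>x. indicator {0<..<1} x *\<^sub>R f x)"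
    by (rule integral_cong_AE) (use ae in auto)
  finally show "integral\<^sup>L I01 f = set_lebesgue_integral lborel {0<..<1} f"
    unfolding set_lebesgue_integral_def .
qed

lemma LBINT01: "(LBINT x=0..1. f x) = set_lebesgue_integral lborel {0<..<1} f"
  unfolding interval_lebesgue_integral_def by (simp add: zero_ereal_def one_ereal_def)

lemma powr_int:
  fixes b :: real assumes b: "b > -1"
  shows "integrable I01 (\<lambda>x. x powr b)" "integral\<^sup>L I01 (\<lambda>x. x powr b) = 1 / (b + 1)"
proof -
  let ?F = "\<lambda>x::real. x powr (b + 1) / (b + 1)"
  have D: "DERIV ?F x :> x powr b" if "0 < x" for x
  proof -
    have "DERIV (\<lambda>x. x powr (b + 1)) x :> (b + 1) * x powr (b + 1 - 1)"
      by (rule has_real_derivative_powr[OF that])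
    then have "DERIV ?F x :> (b + 1) * x powr (b + 1 - 1) / (b + 1)"
      by (rule DERIV_cdivide)
    then show ?thesis using b by simp
  qed
  have lim0: "(?F \<longlongrightarrow> 0) (at_right 0)"
  proof -
    have "((\<lambda>x::real. x powr (b + 1)) \<longlongrightarrow> 0) (at_right 0)"
      using b by (intro tendsto_zero_powrI) (auto intro: tendsto_ident_at simp: eventually_at_filter)
    then show ?thesis using tendsto_divide_zero by blast
  qed
  have lim1: "(?F \<longlongrightarrow> 1 / (b + 1)) (at_left 1)"
  proof -
    have "isCont ?F 1" using b by (intro continuous_intros) auto
    then have "(?F \<longlongrightarrow> ?F 1) (at_left 1)" by (simp add: isCont_def filterlim_at_split)
    then show ?thesis by simp
  qed
  have h1: "(0::ereal) < 1" by simp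
  have h2: "\<And>x. 0 < ereal x \<Longrightarrow> ereal x < 1 \<Longrightarrow> DERIV ?F x :> x powr b" using D by (simp add: zero_ereal_def)
  have h3: "\<And>x. 0 < ereal x \<Longrightarrow> ereal x < 1 \<Longrightarrow> isCont (\<lambda>x. x powr b) x"
    by (intro continuous_intros) (auto simp: zero_ereal_def)
  have h4: "AE x in lborel. 0 < ereal x \<longrightarrow> ereal x < 1 \<longrightarrow> 0 \<le> x powr b" by simp
  have h5: "((?F \<circ> real_of_ereal) \<longlongrightarrow> 0) (at_right 0)" using lim0 by (simp add: zero_ereal_def ereal_tendsto_simps)
  have h6: "((?F \<circ> real_of_ereal) \<longlongrightarrow> 1 / (b + 1)) (at_left 1)" using lim1 by (simp add: one_ereal_def ereal_tendsto_simps)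
  note r = interval_integral_FTC_nonneg[OF h1 h2 h3 h4 h5 h6]
  have m: "(\<lambda>x::real. x powr b) \<in> borel_measurable borel" by measurable
  show "integrable I01 (\<lambda>x. x powr b)" using r(1) I01_lborel(1)[OF m] by (simp add: zero_ereal_def one_ereal_def)
  show "integral\<^sup>L I01 (\<lambda>x. x powr b) = 1 / (b + 1)" using r(2) I01_lborel(2)[OF m] LBINT01[of "\<lambda>x. x powr b"] by simp
qed

lemma pow_le_exp: assumes "y \<ge> 0" shows "y ^ k \<le> real k ^ k * exp y"
proof (cases "k = 0")
  case True then show ?thesis using assms by simp
next
  case False
  have "y / k \<le> exp (y / k)" using exp_ge_add_one_self[of "y / k"] by linarith
  then have "(y / k) ^ k \<le> exp (y / k) ^ k" using assms by (intro power_mono) auto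
  also have "\<dots> = exp y" using False by (simp add: exp_of_nat_mult[symmetric])
  finally have "y ^ k / real k ^ k \<le> exp y" by (simp add: power_divide)
  then show ?thesis using False by (simp add: field_simps mult.commute)
qed

lemma log_pow_bound:
  fixes x eps :: real
  assumes x: "0 < x" "x \<le> 1" and eps: "eps > 0"
  shows "\<bar>ln x\<bar> ^ k * x powr eps \<le> (real k / eps) ^ k"
proof -
  define y where "y = - ln x"
  have y: "y \<ge> 0" using x by (simp add: y_def)
  have ax: "\<bar>ln x\<bar> = y" using x by (simp add: y_def)
  have px: "x powr eps = exp (- eps * y)" using x by (simp add: y_def powr_def)
  have "(eps * y) ^ k \<le> real k ^ k * exp (eps * y)" using y eps by (intro pow_le_exp) simp
  then have "eps ^ k * (y ^ k * exp (- eps * y)) \<le> real k ^ k * (exp (eps * y) * exp (- eps * y))"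
    by (simp add: power_mult_distrib mult.assoc)
  also have "exp (eps * y) * exp (- eps * y) = 1" by (simp add: exp_minus_inverse[symmetric] exp_add[symmetric])
  finally have "y ^ k * exp (- eps * y) \<le> real k ^ k / eps ^ k" using eps
    by (simp add: field_simps mult.commute)
  then show ?thesis by (simp add: ax px power_divide)
qed

lemma AE01_pos: "AE x in I01. 0 < x"
proof -
  have "AE x in lebesgue. (x::real) \<noteq> 0" by (rule AE_completion[OF AE_lborel_singleton])
  then have "AE x in lebesgue. x \<in> {0..1::real} \<longrightarrow> 0 < x" by (rule eventually_mono) (auto simp: order_less_le)
  then show ?thesis by (simp add: AE_restrict_space_iff)
qed

definition E :: "nat \<Rightarrow> complex \<Rightarrow> real \<Rightarrow> complex" where
  "E j s x = (complex_of_real (ln x)) ^ j * exp (s * complex_of_real (ln x))"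

lemma E_meas[measurable]: "E j s \<in> borel_measurable borel"
  unfolding E_def by measurable

lemma norm_E: "0 < x \<Longrightarrow> cmod (E j s x) = \<bar>ln x\<bar> ^ j * x powr Re s"
  unfolding E_def by (simp add: norm_mult norm_power powr_def)

lemma E_integrable: assumes s: "Re s > -1" shows "integrable I01 (E j s)"
proof -
  define eps where "eps = (Re s + 1) / 2"
  have eps: "eps > 0" using s by (simp add: eps_def)
  define C where "C = (real j / eps) ^ j"
  have b: "-1 < Re s - eps" using s unfolding eps_def by argo
  have i: "integrable I01 (\<lambda>x. C * x powr (Re s - eps))"
    using powr_int(1)[OF b] by simp
  show ?thesis
  proof (rule Bochner_Integration.integrable_bound[OF i])
    show "E j s \<in> borel_measurable I01" by (intro measurable_restrict_space1 measurable_completion) simp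
    show "AE x in I01. norm (E j s x) \<le> norm (C * x powr (Re s - eps))"
      using AE01_pos
    proof (rule AE_mp)
      show "AE x in I01. 0 < x \<longrightarrow> norm (E j s x) \<le> norm (C * x powr (Re s - eps))"
      proof (rule AE_I2, rule impI)
        fix x assume x1: "x \<in> space I01" and x: "0 < x"
        have x1': "x \<le> 1" using x1 by simp
        have "cmod (E j s x) = (\<bar>ln x\<bar> ^ j * x powr eps) * x powr (Re s - eps)"
          using x by (simp add: norm_E powr_add[symmetric] mult.assoc)
        also have "\<dots> \<le> C * x powr (Re s - eps)"
          unfolding C_def by (rule mult_right_mono[OF log_pow_bound[OF x x1' eps]]) simp
        finally show "norm (E j s x) \<le> norm (C * x powr (Re s - eps))"
          using eps by (simp add: C_def)
      qed
    qed
  qed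
qed

lemma E_tendsto0: assumes s: "Re s > 0" shows "(E j s \<longlongrightarrow> 0) (at_right 0)"
proof -
  define eps where "eps = Re s / 2"
  have eps: "eps > 0" using s by (simp add: eps_def)
  have b: "Re s - eps > 0" using s unfolding eps_def by argo
  have l: "((\<lambda>x::real. x powr (Re s - eps)) \<longlongrightarrow> 0) (at_right 0)"
    using b by (intro tendsto_zero_powrI) (auto intro: tendsto_ident_at simp: eventually_at_filter)
  show ?thesis
  proof (rule tendsto_0_le[OF l, where K="(real j / eps) ^ j"])
    have "eventually (\<lambda>x::real. 0 < x \<and> x < 1) (at_right 0)"
      by (simp add: eventually_at_right_field) (auto intro: exI[of _ 1])
    then show "\<forall>\<^sub>F x in at_right 0. norm (E j s x) \<le> norm (x powr (Re s - eps)) * (real j / eps) ^ j"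
    proof (rule eventually_mono)
      fix x :: real assume x: "0 < x \<and> x < 1"
      have "cmod (E j s x) = (\<bar>ln x\<bar> ^ j * x powr eps) * x powr (Re s - eps)"
        using x by (simp add: norm_E powr_add[symmetric] mult.assoc)
      also have "\<dots> \<le> (real j / eps) ^ j * x powr (Re s - eps)"
        by (rule mult_right_mono[OF log_pow_bound]) (use x eps in auto)
      finally show "norm (E j s x) \<le> norm (x powr (Re s - eps)) * (real j / eps) ^ j"
        by (simp add: mult.commute)
    qed
  qed
qed

lemma E_at1: "E j s 1 = (if j = 0 then 1 else 0)"
  unfolding E_def by simp

lemma E_cont: "0 < x \<Longrightarrow> isCont (E j s) x"
  unfolding E_def by (intro continuous_intros) auto

lemma E_step:
  assumes s: "Re s > -1"
  shows "integral\<^sup>L I01 (E j s) + of_nat j / (s + 1) * integral\<^sup>L I01 (E (j - 1) s)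
         = (if j = 0 then 1 / (s + 1) else 0)"
proof -
  have s1: "s + 1 \<noteq> 0"
  proof
    assume "s + 1 = 0" then have "Re (s + 1) = 0" by simp
    then show False using s by simp
  qed
  define H where "H w = w ^ j * exp ((s + 1) * w) / (s + 1)" for w :: complex
  define H' where "H' w = (of_nat j * w ^ (j - 1) * exp ((s + 1) * w) + w ^ j * ((s + 1) * exp ((s + 1) * w))) / (s + 1)" for w :: complex
  have dH: "(H has_field_derivative H' w) (at w)" for w
    unfolding H_def H'_def using s1 by (auto intro!: derivative_eq_intros)
  define F where "F x = E j (s + 1) x / (s + 1)" for x
  define f where "f x = E j s x + of_nat j / (s + 1) * E (j - 1) s x" for x
  have FH: "F = (\<lambda>t. H (of_real t)) \<circ> ln"
    by (auto simp: F_def H_def E_def fun_eq_iff)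
  have dF: "(F has_vector_derivative f x) (at x)" if x: "0 < x" for x
  proof -
    have d1: "(ln has_vector_derivative (1 / x)) (at x)"
      using x by (auto intro!: derivative_eq_intros simp: has_real_derivative_iff_has_vector_derivative[symmetric])
    have d2: "((\<lambda>t. H (of_real t)) has_vector_derivative H' (of_real (ln x))) (at (ln x))"
      by (rule has_vector_derivative_real_field[OF dH])
    have "(F has_vector_derivative ((1 / x) *\<^sub>R H' (of_real (ln x)))) (at x)"
      unfolding FH by (rule vector_diff_chain_at[OF d1 d2])
    moreover have "(1 / x) *\<^sub>R H' (of_real (ln x)) = f x"
    proof -
      have ex: "exp ((s + 1) * complex_of_real (ln x)) = exp (s * complex_of_real (ln x)) * of_real x"
        using x by (simp add: distrib_right exp_add exp_of_real)
      have xc: "complex_of_real x \<noteq> 0" using x by simp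
      have xs: "complex_of_real x + s * complex_of_real x \<noteq> 0"
        using xc s1 by (metis add.commute mult_eq_0_iff distrib_right mult_1)
      show ?thesis using x s1 xc xs unfolding H'_def f_def E_def ex scaleR_conv_of_real
        by (simp add: field_simps)
    qed
    ultimately show ?thesis by simp
  qed
  have mf: "f \<in> borel_measurable borel" unfolding f_def by measurable
  have if1: "integrable I01 f" unfolding f_def using E_integrable[OF s] by simp
  have fint: "set_integrable lborel (einterval 0 1) f"
    using if1 I01_lborel(1)[OF mf] by (simp add: zero_ereal_def one_ereal_def)
  have h1: "(0::ereal) < 1" by simp
  have h2: "\<And>x. 0 < ereal x \<Longrightarrow> ereal x < 1 \<Longrightarrow> (F has_vector_derivative f x) (at x)"
    using dF by (simp add: zero_ereal_def)
  have h3: "\<And>x. 0 < ereal x \<Longrightarrow> ereal x < 1 \<Longrightarrow> isCont f x"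
    unfolding f_def by (intro continuous_intros E_cont) (auto simp: zero_ereal_def)
  have s1': "Re (s + 1) > 0" using s by simp
  have lim0: "(F \<longlongrightarrow> 0) (at_right 0)"
    unfolding F_def using tendsto_divide[OF E_tendsto0[OF s1', of j] tendsto_const, of "s+1"] s1 by simp
  have lim1: "(F \<longlongrightarrow> (if j = 0 then 1 / (s + 1) else 0)) (at_left 1)"
  proof -
    have "isCont F 1" unfolding F_def using s1 by (intro continuous_intros E_cont) auto
    then have "(F \<longlongrightarrow> F 1) (at_left 1)" by (simp add: isCont_def filterlim_at_split)
    then show ?thesis by (cases "j = 0") (simp_all add: F_def E_at1)
  qed
  have h5: "((F \<circ> real_of_ereal) \<longlongrightarrow> 0) (at_right 0)" using lim0 by (simp add: zero_ereal_def ereal_tendsto_simps)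
  have h6: "((F \<circ> real_of_ereal) \<longlongrightarrow> (if j = 0 then 1 / (s + 1) else 0)) (at_left 1)"
    using lim1 by (simp add: one_ereal_def ereal_tendsto_simps)
  have r: "(LBINT x=0..1. f x) = (if j = 0 then 1 / (s + 1) else 0) - 0"
    by (rule interval_integral_FTC_integrable[OF h1 h2 h3 fint h5 h6])
  have "integral\<^sup>L I01 f = (if j = 0 then 1 / (s + 1) else 0)"
    using r I01_lborel(2)[OF mf] LBINT01[of f] by simp
  then show ?thesis unfolding f_def using E_integrable[OF s] by simp
qed

lemma E_integral: assumes s: "Re s > -1"
  shows "integral\<^sup>L I01 (E j s) = (-1) ^ j * fact j / (s + 1) ^ (j + 1)"
proof (induction j)
  case 0
  then show ?case using E_step[OF s, of 0] by simp
next
  case (Suc j)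
  have s1: "s + 1 \<noteq> 0"
  proof
    assume "s + 1 = 0" then have "Re (s + 1) = 0" by simp
    then show False using s by simp
  qed
  have "integral\<^sup>L I01 (E (Suc j) s) = - (of_nat (Suc j) / (s + 1) * integral\<^sup>L I01 (E j s))"
    using E_step[OF s, of "Suc j"] by (simp add: eq_neg_iff_add_eq_0)
  also have "\<dots> = (-1) ^ Suc j * fact (Suc j) / (s + 1) ^ (Suc j + 1)"
    unfolding Suc.IH using s1 by (simp add: field_simps minus_divide_left)
  finally show ?case .
qed


lemma alt_choose:
  "(\<Sum>j\<le>m. (-1)^j * of_nat (m choose j) * of_nat (j choose i)) = (if i = m then (-1)^m else (0::'a::comm_ring_1))"
proof (cases "i \<le> m")
  case False
  then have "\<And>j. j \<le> m \<Longrightarrow> (j choose i) = 0" by simp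
  then have "(\<Sum>j\<le>m. (-1)^j * of_nat (m choose j) * of_nat (j choose i)) = (\<Sum>j\<le>m. (0::'a))"
    using False by (intro sum.cong refl) (simp add: binomial_eq_0)
  then show ?thesis using False by simp
next
  case True
  have split: "{..m} = {..<i} \<union> {i..m}" using True by auto
  have z: "(\<Sum>j\<in>{..<i}. (-1)^j * of_nat (m choose j) * of_nat (j choose i)) = (0::'a)"
    by (rule sum.neutral) (simp add: binomial_eq_0)
  have "(\<Sum>j\<le>m. (-1)^j * of_nat (m choose j) * of_nat (j choose i))
      = (\<Sum>j\<in>{i..m}. (-1)^j * of_nat (m choose j) * of_nat (j choose i) :: 'a)"
    unfolding split by (subst sum.union_disjoint) (auto simp: z)
  also have "\<dots> = (\<Sum>j\<in>{i..m}. (-1)^j * of_nat (m choose i) * of_nat ((m - i) choose (j - i)))"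
  proof (rule sum.cong[OF refl])
    fix j assume j: "j \<in> {i..m}"
    have "(m choose j) * (j choose i) = (m choose i) * ((m - i) choose (j - i))"
      using j by (intro choose_mult) auto
    then have "of_nat (m choose j) * of_nat (j choose i) = (of_nat (m choose i) * of_nat ((m - i) choose (j - i)) :: 'a)"
      by (metis of_nat_mult)
    then show "(-1)^j * of_nat (m choose j) * of_nat (j choose i) = ((-1)^j * of_nat (m choose i) * of_nat ((m - i) choose (j - i)) :: 'a)"
      by (simp add: mult.assoc)
  qed
  also have "\<dots> = (\<Sum>l\<in>{0..m-i}. (-1)^(l+i) * of_nat (m choose i) * of_nat ((m - i) choose l))"
  proof -
    have "{i..m} = {0 + i..(m - i) + i}" using True by simp
    then show ?thesis by (simp only: sum.shift_bounds_cl_nat_ivl) simp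
  qed
  also have "\<dots> = (-1)^i * of_nat (m choose i) * (\<Sum>l\<le>m-i. (-1)^l * of_nat ((m - i) choose l))"
    by (simp add: sum_distrib_left atLeast0AtMost power_add mult_ac)
  also have "\<dots> = (if i = m then (-1)^m else 0)"
  proof (cases "i = m")
    case True then show ?thesis by simp
  next
    case False
    then have "m - i > 0" using \<open>i \<le> m\<close> by simp
    then show ?thesis using False by (simp add: choose_alternating_sum)
  qed
  finally show ?thesis .
qed

lemma vand_sym: "(\<Sum>i\<le>k. (j choose i) * (k choose i)) = (j + k) choose k"
proof -
  have "(\<Sum>i\<le>k. (j choose i) * (k choose i)) = (\<Sum>i\<le>k. (j choose i) * (k choose (k - i)))"
    by (intro sum.cong refl) (simp add: binomial_symmetric[symmetric])
  also have "\<dots> = (j + k) choose k" by (rule vandermonde)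
  finally show ?thesis .
qed

lemma T_identity:
  "(\<Sum>j\<le>m. (-1)^j * of_nat (m choose j) * of_nat ((j + k) choose k)) = ((-1)^m * of_nat (k choose m) :: 'a::comm_ring_1)"
proof -
  have "(\<Sum>j\<le>m. (-1)^j * of_nat (m choose j) * of_nat ((j + k) choose k))
     = (\<Sum>j\<le>m. \<Sum>i\<le>k. (-1)^j * of_nat (m choose j) * (of_nat (j choose i) * of_nat (k choose i)) :: 'a)"
    by (simp add: vand_sym[symmetric] sum_distrib_left)
  also have "\<dots> = (\<Sum>i\<le>k. of_nat (k choose i) * (\<Sum>j\<le>m. (-1)^j * of_nat (m choose j) * of_nat (j choose i)))"
    by (subst sum.swap) (simp add: sum_distrib_left mult_ac)
  also have "\<dots> = (\<Sum>i\<le>k. of_nat (k choose i) * (if i = m then (-1)^m else 0))"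
    by (simp add: alt_choose)
  also have "\<dots> = (-1)^m * of_nat (k choose m)"
    by (cases "m \<le> k") (auto simp: if_distrib sum.delta binomial_eq_0 cong: if_cong)
  finally show ?thesis .
qed

lemma ortho_sum:
  "(\<Sum>j\<le>m. \<Sum>k\<le>n. (real (m choose j) / fact j) * (real (n choose k) / fact k) * ((-1)^(j+k) * fact (j+k)))
    = (if m = n then 1 else 0)"
proof -
  have inner: "(\<Sum>j\<le>m. (real (m choose j) / fact j) * ((-1)^(j+k) * fact (j+k)))
        = (-1)^k * fact k * ((-1)^m * real (k choose m))" for k
  proof -
    have "(\<Sum>j\<le>m. (real (m choose j) / fact j) * ((-1)^(j+k) * fact (j+k)))
        = (\<Sum>j\<le>m. (-1)^k * fact k * ((-1)^j * real (m choose j) * real ((j + k) choose k)))"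
    proof (rule sum.cong[OF refl])
      fix j
      have "real ((j + k) choose k) = fact (j + k) / (fact k * fact j)"
        by (subst binomial_fact) auto
      then show "real (m choose j) / fact j * ((-1)^(j+k) * fact (j+k)) =
          (-1)^k * fact k * ((-1)^j * real (m choose j) * real ((j + k) choose k))"
        by (simp add: field_simps power_add)
    qed
    also have "\<dots> = (-1)^k * fact k * (\<Sum>j\<le>m. (-1)^j * real (m choose j) * real ((j + k) choose k))"
      by (simp add: sum_distrib_left)
    also have "\<dots> = (-1)^k * fact k * ((-1)^m * real (k choose m))"
      using T_identity[of m k, where 'a=real] by simp
    finally show ?thesis .
  qed
  have "(\<Sum>j\<le>m. \<Sum>k\<le>n. (real (m choose j) / fact j) * (real (n choose k) / fact k) * ((-1)^(j+k) * fact (j+k)))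
      = (\<Sum>k\<le>n. (real (n choose k) / fact k) * (\<Sum>j\<le>m. (real (m choose j) / fact j) * ((-1)^(j+k) * fact (j+k))))"
    by (subst sum.swap) (simp add: sum_distrib_left mult_ac)
  also have "\<dots> = (\<Sum>k\<le>n. (-1)^m * ((-1)^k * real (n choose k) * real (k choose m)))"
    unfolding inner by (intro sum.cong refl) simp
  also have "\<dots> = (-1)^m * (\<Sum>k\<le>n. (-1)^k * real (n choose k) * real (k choose m))"
    by (simp add: sum_distrib_left)
  also have "\<dots> = (if m = n then 1 else 0)"
    by (simp add: alt_choose power_add[symmetric] flip: power_add)
  finally show ?thesis .
qed


lemma borel_I01: "f \<in> borel_measurable borel \<Longrightarrow> f \<in> borel_measurable I01"
  by (intro measurable_restrict_space1 measurable_completion) simp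

lemma E_mult: "E j a x * E k b x = E (j + k) (a + b) x"
  unfolding E_def by (simp add: power_add exp_add distrib_right mult_ac)

lemma cnj_E: "cnj (E j a x) = E j (cnj a) x"
  unfolding E_def by (simp add: exp_cnj)

lemma E_AE_cong_integral: assumes "AE x in I01. f x = g x" "f \<in> borel_measurable I01" "g \<in> borel_measurable I01"
  shows "integral\<^sup>L I01 f = integral\<^sup>L I01 g"
  by (rule integral_cong_AE) (use assms in auto)

lemma L2_E: assumes s: "Re s > -1/2" shows "L2 (E k s)"
  unfolding L2_iff
proof
  show "E k s \<in> borel_measurable I01" by (rule borel_I01) simp
  have s2: "Re (complex_of_real (2 * Re s)) > -1" using s by simp
  have i: "integrable I01 (\<lambda>x. cmod (E (2 * k) (complex_of_real (2 * Re s)) x))"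
    using E_integrable[OF s2] by simp
  show "integrable I01 (\<lambda>x. (cmod (E k s x))^2)"
  proof (rule integrable_cong_AE_imp[OF i])
    show "(\<lambda>x. (cmod (E k s x))^2) \<in> borel_measurable I01" by (rule borel_I01) simp
    show "AE x in I01. cmod (E (2 * k) (complex_of_real (2 * Re s)) x) = (cmod (E k s x))^2"
      using AE01_pos
    proof eventually_elim
      case (elim x)
      have p: "x powr (Re s * 2) = x powr Re s * x powr Re s"
        by (simp add: powr_add[symmetric] mult.commute)
      have q: "\<bar>ln x\<bar> ^ (k * 2) = \<bar>ln x\<bar> ^ k * \<bar>ln x\<bar> ^ k"
        by (simp add: power_add[symmetric] mult_2_right)
      show ?case using elim by (simp add: norm_E p q power2_eq_square mult_ac)
    qed
  qed
qed

lemma efun_E: "e_fun n x = (\<Sum>k\<le>n. complex_of_real (real (n choose k) / fact k) * E k 0 x)"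
  unfolding e_fun_def E_def by (simp add: of_real_sum)

lemma efun_meas[measurable]: "e_fun n \<in> borel_measurable borel"
  unfolding e_fun_def by measurable

lemma L2_efun: "L2 (e_fun n)"
proof -
  have "L2 (\<lambda>x. \<Sum>k\<le>n. complex_of_real (real (n choose k) / fact k) * E k 0 x)"
    by (rule L2_sum) (auto intro: L2_E)
  then show ?thesis by (simp add: efun_E[abs_def])
qed

lemma cnj_efun: "cnj (e_fun n x) = e_fun n x"
  unfolding e_fun_def by simp

lemma efun_ortho: "l2_inner (e_fun m) (e_fun n) = (if m = n then 1 else 0)"
proof -
  define c where "c n k = complex_of_real (real (n choose k) / fact k)" for n k
  have prod: "cnj (e_fun m x) * e_fun n x = (\<Sum>j\<le>m. \<Sum>k\<le>n. c m j * c n k * E (j + k) 0 x)" for x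
    unfolding cnj_efun by (simp only: efun_E c_def[symmetric]) (simp add: sum_product E_mult mult_ac)
  have "l2_inner (e_fun m) (e_fun n) = (\<Sum>j\<le>m. \<Sum>k\<le>n. c m j * c n k * integral\<^sup>L I01 (E (j + k) 0))"
    unfolding inner_iff prod
    by (simp add: integral_sum E_integrable integrable_sum)
  also have "\<dots> = (\<Sum>j\<le>m. \<Sum>k\<le>n. complex_of_real ((real (m choose j) / fact j) * (real (n choose k) / fact k) * ((-1)^(j+k) * fact (j+k))))"
    by (simp add: E_integral c_def)
  also have "\<dots> = complex_of_real (\<Sum>j\<le>m. \<Sum>k\<le>n. (real (m choose j) / fact j) * (real (n choose k) / fact k) * ((-1)^(j+k) * fact (j+k)))"
    by (simp add: of_real_sum)
  also have "\<dots> = (if m = n then 1 else 0)" by (simp only: ortho_sum) simp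
  finally show ?thesis .
qed

lemma mon_pos: "0 < x \<Longrightarrow> mon s x = E 0 s x"
  unfolding mon_def E_def by (simp add: powr_def Ln_of_real)

lemma mon_zero: "mon s 0 = 0"
  unfolding mon_def by simp

lemma mon_meas: "mon s \<in> borel_measurable I01"
proof -
  have m: "(\<lambda>x. if x = 0 then 0 else E 0 s x) \<in> borel_measurable I01"
    by (rule borel_I01) measurable
  show ?thesis
  proof (rule measurable_cong[THEN iffD1, OF _ m])
    fix x assume "x \<in> space I01"
    then have "0 \<le> x" by simp
    then show "(if x = 0 then 0 else E 0 s x) = mon s x"
      by (auto simp: mon_zero mon_pos order_less_le)
  qed
qed

lemma mon_AE: "AE x in I01. mon s x = E 0 s x"
  using AE01_pos by eventually_elim (simp add: mon_pos)

lemma L2_mon: assumes "Re s > -1/2" shows "L2 (mon s)"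
  by (rule L2_cong[OF L2_E[OF assms, of 0]]) (use mon_AE[of s] in \<open>auto intro: borel_I01 mon_meas elim: AE_mp\<close>)

lemma efun_mon_coeff: assumes s: "Re s > -1"
  shows "l2_inner (e_fun n) (mon s) = s ^ n / (s + 1) ^ (n + 1)"
proof -
  have s1: "s + 1 \<noteq> 0"
  proof
    assume "s + 1 = 0" then have "Re (s + 1) = 0" by simp
    then show False using s by simp
  qed
  define c where "c k = complex_of_real (real (n choose k) / fact k)" for k
  have ae: "AE x in I01. cnj (e_fun n x) * mon s x = (\<Sum>k\<le>n. c k * E k s x)"
    using mon_AE[of s]
  proof eventually_elim
    case (elim x)
    show ?case unfolding cnj_efun elim
      by (simp only: efun_E c_def[symmetric]) (simp add: sum_distrib_left E_def mult_ac)
  qed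
  have "l2_inner (e_fun n) (mon s) = integral\<^sup>L I01 (\<lambda>x. \<Sum>k\<le>n. c k * E k s x)"
    unfolding inner_iff
  proof (rule integral_cong_AE[OF _ _ ae])
    show "(\<lambda>x. cnj (e_fun n x) * mon s x) \<in> borel_measurable I01"
      using borel_I01[OF efun_meas[of n]] mon_meas[of s] by measurable
    show "(\<lambda>x. \<Sum>k\<le>n. c k * E k s x) \<in> borel_measurable I01" by (rule borel_I01) measurable
  qed
  also have "\<dots> = (\<Sum>k\<le>n. c k * integral\<^sup>L I01 (E k s))"
    by (simp add: integral_sum E_integrable[OF s] integrable_sum)
  also have "\<dots> = (\<Sum>k\<le>n. of_nat (n choose k) * (- 1 / (s + 1)) ^ k * 1 ^ (n - k)) / (s + 1)"
    unfolding E_integral[OF s] sum_divide_distrib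
  proof (rule sum.cong[OF refl])
    fix k assume "k \<in> {..n}"
    have s1': "1 + s \<noteq> 0" using s1 by (simp add: add.commute)
    show "c k * ((- 1) ^ k * fact k / (s + 1) ^ (k + 1)) = of_nat (n choose k) * (- 1 / (s + 1)) ^ k * 1 ^ (n - k) / (s + 1)"
      unfolding c_def power_divide using s1 s1' by (simp add: field_simps)
  qed
  also have "\<dots> = (- 1 / (s + 1) + 1) ^ n / (s + 1)"
    by (simp only: binomial_ring)
  also have "\<dots> = s ^ n / (s + 1) ^ (n + 1)"
    using s1 by (simp add: field_simps power_divide)
  finally show ?thesis .
qed


lemma integrable_E_f: assumes "L2 f" "Re s > -1/2" shows "integrable I01 (\<lambda>x. E k s x * f x)"
  by (rule L2_prod'[OF L2_E[OF assms(2)] assms(1)])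

lemma moments_E:
  assumes f: "L2 f" and orth: "\<And>n. l2_inner (e_fun n) f = 0"
  shows "integral\<^sup>L I01 (\<lambda>x. E k 0 x * f x) = 0"
proof (induction k rule: less_induct)
  case (less k)
  define M where "M j = integral\<^sup>L I01 (\<lambda>x. E j 0 x * f x)" for j
  define c where "c j = complex_of_real (real (k choose j) / fact j)" for j
  have "l2_inner (e_fun k) f = integral\<^sup>L I01 (\<lambda>x. \<Sum>j\<le>k. c j * (E j 0 x * f x))"
    unfolding inner_iff cnj_efun by (simp only: efun_E c_def[symmetric]) (simp add: sum_distrib_left sum_distrib_right mult_ac)
  also have "\<dots> = (\<Sum>j\<le>k. c j * M j)"
    unfolding M_def using integrable_E_f[OF f, of 0] by (simp add: integral_sum integrable_sum)
  also have "\<dots> = (\<Sum>j<k. c j * M j) + c k * M k"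
    by (simp add: lessThan_Suc_atMost[symmetric])
  also have "(\<Sum>j<k. c j * M j) = 0"
    using less.IH unfolding M_def by simp
  finally have "c k * M k = 0" using orth[of k] by simp
  moreover have "c k \<noteq> 0" unfolding c_def by simp
  ultimately show ?case unfolding M_def by simp
qed

lemma exp_partial_bound: "norm (\<Sum>j<N. z ^ j /\<^sub>R fact j) \<le> exp (norm (z::complex))"
proof -
  have "norm (\<Sum>j<N. z ^ j /\<^sub>R fact j) \<le> (\<Sum>j<N. norm z ^ j /\<^sub>R fact j)"
    by (rule order_trans[OF norm_sum]) (simp add: norm_power)
  also have "\<dots> \<le> (\<Sum>j. norm z ^ j /\<^sub>R fact j)"
    by (rule sum_le_suminf) (use exp_converges[of "norm z"] in \<open>auto simp: sums_iff\<close>)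
  also have "\<dots> = exp (norm z)" using exp_converges[of "norm z"] by (simp add: sums_iff)
  finally show ?thesis .
qed

lemma boot_step:
  assumes f: "L2 f" and b: "b \<ge> 0"
    and P: "\<And>k. integral\<^sup>L I01 (\<lambda>x. E k (complex_of_real b) x * f x) = 0"
  shows "integral\<^sup>L I01 (\<lambda>x. E k (complex_of_real (b + 1/4)) x * f x) = 0"
proof -
  define s where "s N x = (\<Sum>j<N. (1 / (4 ^ j * fact j)) * (E (k + j) (complex_of_real b) x * f x))" for N x
  have int: "\<And>j. integrable I01 (\<lambda>x. E (k + j) (complex_of_real b) x * f x)"
    using integrable_E_f[OF f] b by simp
  have s0: "integral\<^sup>L I01 (s N) = 0" for N
    unfolding s_def using int P by (simp add: integral_sum integrable_sum)
  have s_alt: "s N x = E k (complex_of_real b) x * f x * (\<Sum>j<N. (complex_of_real (ln x) / 4) ^ j /\<^sub>R fact j)" for N x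
    unfolding s_def
    by (simp add: sum_distrib_left E_def power_add power_divide scaleR_conv_of_real field_simps)
  have lim: "(\<lambda>N. s N x) \<longlonglongrightarrow> E k (complex_of_real (b + 1/4)) x * f x" for x
  proof -
    have "(\<lambda>N. \<Sum>j<N. (complex_of_real (ln x) / 4) ^ j /\<^sub>R fact j) \<longlonglongrightarrow> exp (complex_of_real (ln x) / 4)"
      using exp_converges[of "complex_of_real (ln x) / 4"] by (simp add: sums_def)
    then have "(\<lambda>N. s N x) \<longlonglongrightarrow> E k (complex_of_real b) x * f x * exp (complex_of_real (ln x) / 4)"
      unfolding s_alt by (intro tendsto_intros)
    moreover have "E k (complex_of_real b) x * f x * exp (complex_of_real (ln x) / 4) = E k (complex_of_real (b + 1/4)) x * f x"
      unfolding E_def by (simp add: exp_add[symmetric] field_simps)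
    ultimately show ?thesis by simp
  qed
  define w where "w x = cmod (E k (complex_of_real (b - 1/4)) x * f x)" for x
  have wi: "integrable I01 w"
    unfolding w_def using integrable_E_f[OF f, of "complex_of_real (b - 1/4)" k] b by simp
  have bound: "AE x in I01. norm (s N x) \<le> w x" for N
    using AE01_pos
  proof (rule AE_mp, intro AE_I2 impI)
    fix x assume x1: "x \<in> space I01" and x: "0 < x"
    have x1': "x \<le> 1" using x1 by simp
    have lx: "\<bar>ln x\<bar> = - ln x" using x x1' by simp
    have "norm (s N x) \<le> cmod (E k (complex_of_real b) x) * cmod (f x) * exp (norm (complex_of_real (ln x) / 4))"
      unfolding s_alt norm_mult by (intro mult_left_mono exp_partial_bound) auto
    also have "exp (norm (complex_of_real (ln x) / 4)) = x powr (- 1/4)"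
      using x lx by (simp add: powr_def norm_divide)
    also have "cmod (E k (complex_of_real b) x) * cmod (f x) * x powr (- 1/4) = w x"
      unfolding w_def norm_mult using x
      by (simp add: norm_E powr_add[symmetric] mult_ac)
    finally show "norm (s N x) \<le> w x" .
  qed
  have [measurable]: "f \<in> borel_measurable I01" using L2_meas[OF f] .
  have [measurable]: "\<And>j s. E j s \<in> borel_measurable I01" by (rule borel_I01) simp
  have meas_s: "s N \<in> borel_measurable I01" for N
    unfolding s_def by measurable
  have meas_lim: "(\<lambda>x. E k (complex_of_real (b + 1/4)) x * f x) \<in> borel_measurable I01"
    by measurable
  have "(\<lambda>N. integral\<^sup>L I01 (s N)) \<longlonglongrightarrow> integral\<^sup>L I01 (\<lambda>x. E k (complex_of_real (b + 1/4)) x * f x)"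
    by (rule integral_dominated_convergence[OF meas_lim meas_s wi]) (use lim bound in auto)
  then show ?thesis unfolding s0 by (simp add: LIMSEQ_const_iff)
qed

lemma boot:
  assumes f: "L2 f" and orth: "\<And>n. l2_inner (e_fun n) f = 0"
  shows "integral\<^sup>L I01 (\<lambda>x. E k (complex_of_real (real m / 4)) x * f x) = 0"
proof (induction m arbitrary: k)
  case 0
  then show ?case using moments_E[OF f orth] by simp
next
  case (Suc m)
  have e: "complex_of_real (real (Suc m) / 4) = complex_of_real (real m / 4 + 1 / 4)" by simp
  show ?case unfolding e by (rule boot_step[OF f _ Suc.IH]) simp
qed

lemma moments_pow:
  assumes f: "L2 f" and orth: "\<And>n. l2_inner (e_fun n) f = 0"
  shows "integral\<^sup>L I01 (\<lambda>x. complex_of_real (x ^ n) * f x) = 0"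
proof -
  have "integral\<^sup>L I01 (\<lambda>x. complex_of_real (x ^ n) * f x) = integral\<^sup>L I01 (\<lambda>x. E 0 (complex_of_real (real (4 * n) / 4)) x * f x)"
  proof (rule integral_cong_AE)
    have [measurable]: "f \<in> borel_measurable I01" using L2_meas[OF f] .
    have [measurable]: "\<And>j s. E j s \<in> borel_measurable I01" by (rule borel_I01) simp
    have [measurable]: "(\<lambda>x. complex_of_real (x ^ n)) \<in> borel_measurable I01" by (rule borel_I01) simp
    show "(\<lambda>x. complex_of_real (x ^ n) * f x) \<in> borel_measurable I01"
      by measurable
    show "(\<lambda>x. E 0 (complex_of_real (real (4 * n) / 4)) x * f x) \<in> borel_measurable I01"
      by measurable
    show "AE x in I01. complex_of_real (x ^ n) * f x = E 0 (complex_of_real (real (4 * n) / 4)) x * f x"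
      using AE01_pos
    proof eventually_elim
      case (elim x)
      have "exp (complex_of_real (real n) * complex_of_real (ln x)) = complex_of_real (x ^ n)"
        using elim by (simp add: exp_of_nat_mult exp_of_real)
      then show ?case unfolding E_def by simp
    qed
  qed
  also have "\<dots> = 0" by (rule boot[OF f orth])
  finally show ?thesis .
qed


lemma sgn_times_self: "sgn (a::real) * a = \<bar>a\<bar>"
  by (cases "a > 0"; cases "a = 0") auto

lemma cont_orth_zero:
  fixes u :: "real \<Rightarrow> real"
  assumes ui: "integrable I01 u"
    and orth: "\<And>h. continuous_on UNIV h \<Longrightarrow> integral\<^sup>L I01 (\<lambda>x. h x * u x) = 0"
  shows "AE x in I01. u x = 0"
proof -
  have um[measurable]: "u \<in> borel_measurable I01" using ui by auto
  define sg where "sg x = (if x \<in> {0..1} then sgn (u x) else 0)" for x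
  have "(\<lambda>x. sgn (u x)) \<in> borel_measurable I01" by measurable
  then have sgm: "sg \<in> borel_measurable lebesgue"
    unfolding sg_def by (subst (asm) measurable_restrict_space_iff[where c=0]) auto
  have "sg measurable_on UNIV"
    by (rule lebesgue_measurable_imp_measurable_on_real[OF sgm]) simp
  then obtain N g where N: "negligible N" and gc: "\<And>n. continuous_on UNIV (g n)"
      and gl: "\<And>x. x \<notin> N \<Longrightarrow> (\<lambda>n. g n x) \<longlonglongrightarrow> sg x"
    unfolding measurable_on_def by auto
  define t where "t n x = max (-1) (min 1 (g n x))" for n x
  have tc: "continuous_on UNIV (t n)" for n
    unfolding t_def by (intro continuous_intros gc)
  have tm[measurable]: "t n \<in> borel_measurable I01" for n
    by (rule borel_I01) (rule borel_measurable_continuous_onI[OF tc])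
  have sg1: "max (-1) (min 1 (sg x)) = sg x" for x
    unfolding sg_def by (auto simp: sgn_real_def)
  have tl: "(\<lambda>n. t n x) \<longlonglongrightarrow> sg x" if "x \<notin> N" for x
  proof -
    have "(\<lambda>n. max (-1) (min 1 (g n x))) \<longlonglongrightarrow> max (-1) (min 1 (sg x))"
      by (intro tendsto_max tendsto_min tendsto_const gl[OF that])
    then show ?thesis unfolding t_def sg1 .
  qed
  have aeN: "AE x in I01. x \<notin> N"
  proof -
    have "N \<in> null_sets lebesgue" using N negligible_iff_null_sets by blast
    then have "AE x in lebesgue. x \<notin> N" by (rule AE_not_in)
    then have "AE x in lebesgue. x \<in> {0..1} \<longrightarrow> x \<notin> N" by (rule eventually_mono) simp
    then show ?thesis by (simp add: AE_restrict_space_iff)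
  qed
  have sgI: "sg \<in> borel_measurable I01" by (rule measurable_restrict_space1[OF sgm])
  have "(\<lambda>n. integral\<^sup>L I01 (\<lambda>x. t n x * u x)) \<longlonglongrightarrow> integral\<^sup>L I01 (\<lambda>x. sg x * u x)"
  proof (rule integral_dominated_convergence[where w="\<lambda>x. \<bar>u x\<bar>"])
    show "(\<lambda>x. sg x * u x) \<in> borel_measurable I01" using sgI by measurable
    show "\<And>n. (\<lambda>x. t n x * u x) \<in> borel_measurable I01" by measurable
    show "integrable I01 (\<lambda>x. \<bar>u x\<bar>)" using ui by simp
    show "AE x in I01. (\<lambda>n. t n x * u x) \<longlonglongrightarrow> sg x * u x"
      using aeN by eventually_elim (intro tendsto_intros tl)
    show "\<And>n. AE x in I01. norm (t n x * u x) \<le> \<bar>u x\<bar>"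
      by (intro AE_I2) (auto simp: t_def abs_mult intro!: mult_left_le_one_le)
  qed
  moreover have "\<And>n. integral\<^sup>L I01 (\<lambda>x. t n x * u x) = 0" using orth tc by blast
  ultimately have "integral\<^sup>L I01 (\<lambda>x. sg x * u x) = 0" by (simp add: LIMSEQ_const_iff)
  moreover have "integral\<^sup>L I01 (\<lambda>x. sg x * u x) = integral\<^sup>L I01 (\<lambda>x. \<bar>u x\<bar>)"
    by (rule Bochner_Integration.integral_cong[OF refl]) (auto simp: sg_def sgn_times_self)
  ultimately have "integral\<^sup>L I01 (\<lambda>x. \<bar>u x\<bar>) = 0" by simp
  then have "AE x in I01. \<bar>u x\<bar> = 0"
    using integral_nonneg_eq_0_iff_AE[of I01 "\<lambda>x. \<bar>u x\<bar>"] ui by simp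
  then show ?thesis by simp
qed

lemma bdd_mult_int:
  assumes f: "integrable I01 f" and g: "g \<in> borel_measurable I01" and B: "\<And>x. x \<in> {0..1} \<Longrightarrow> cmod (g x) \<le> B"
  shows "integrable I01 (\<lambda>x. g x * f x :: complex)"
proof (rule Bochner_Integration.integrable_bound)
  show "integrable I01 (\<lambda>x. B * cmod (f x))" using f by simp
  show "(\<lambda>x. g x * f x) \<in> borel_measurable I01" using g f by measurable
  show "AE x in I01. norm (g x * f x) \<le> norm (B * cmod (f x))"
  proof (rule AE_I2)
    fix x assume "x \<in> space I01"
    then have x: "x \<in> {0..1}" by simp
    have B0: "0 \<le> B" using B[OF x] norm_ge_zero order_trans by blast
    have "norm (g x * f x) \<le> B * cmod (f x)" unfolding norm_mult by (rule mult_right_mono[OF B[OF x]]) simp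
    then show "norm (g x * f x) \<le> norm (B * cmod (f x))" using B0 by simp
  qed
qed

lemma poly_orth:
  assumes f: "integrable I01 f" and mom: "\<And>n. integral\<^sup>L I01 (\<lambda>x. complex_of_real (x ^ n) * f x) = 0"
  shows "integral\<^sup>L I01 (\<lambda>x. complex_of_real (\<Sum>i\<le>m. a i * x ^ i) * f x) = 0"
proof -
  have int: "integrable I01 (\<lambda>x. complex_of_real (x ^ i) * f x)" for i
    by (rule bdd_mult_int[OF f, where B=1]) (auto intro: borel_I01 simp: norm_power power_le_one)
  have "integral\<^sup>L I01 (\<lambda>x. complex_of_real (\<Sum>i\<le>m. a i * x ^ i) * f x)
      = integral\<^sup>L I01 (\<lambda>x. \<Sum>i\<le>m. complex_of_real (a i) * (complex_of_real (x ^ i) * f x))"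
    by (simp add: of_real_sum sum_distrib_right sum_distrib_left mult_ac)
  also have "\<dots> = (\<Sum>i\<le>m. complex_of_real (a i) * integral\<^sup>L I01 (\<lambda>x. complex_of_real (x ^ i) * f x))"
    using int by (simp add: integral_sum integrable_sum)
  also have "\<dots> = 0" using mom by simp
  finally show ?thesis .
qed

lemma cont_orth:
  assumes f: "integrable I01 f" and mom: "\<And>n. integral\<^sup>L I01 (\<lambda>x. complex_of_real (x ^ n) * f x) = 0"
    and h: "continuous_on UNIV h"
  shows "integral\<^sup>L I01 (\<lambda>x. complex_of_real (h x) * f x) = 0"
proof -
  have hm: "h \<in> borel_measurable I01" by (rule borel_I01) (rule borel_measurable_continuous_onI[OF h])
  define K where "K = integral\<^sup>L I01 (\<lambda>x. cmod (f x))"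
  have K: "K \<ge> 0" unfolding K_def by simp
  have bound: "cmod (integral\<^sup>L I01 (\<lambda>x. complex_of_real (h x) * f x)) \<le> e * K" if e: "e > 0" for e
  proof -
    have hc: "continuous_on {0..1} h" using h by (rule continuous_on_subset) simp
    obtain N where N: "\<And>n x. N \<le> n \<Longrightarrow> x \<in> {0..1} \<Longrightarrow> \<bar>h x - (\<Sum>k\<le>n. h (k/n) * Bernstein n k x)\<bar> < e"
      using Bernstein_Weierstrass[OF hc e] by blast
    define p where "p x = (\<Sum>k\<le>N. h (k/N) * Bernstein N k x)" for x
    have "real_polynomial_function p"
      unfolding p_def Bernstein_def
      by (intro real_polynomial_function_sum real_polynomial_function.intros
          real_polynomial_function_power real_polynomial_function_diff finite_atMost
          bounded_linear_ident)
    then obtain a m where pa: "p = (\<lambda>x. \<Sum>i\<le>m. a i * x ^ i)"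
      using real_polynomial_function_imp_sum by blast
    have p0: "integral\<^sup>L I01 (\<lambda>x. complex_of_real (p x) * f x) = 0"
      unfolding pa by (rule poly_orth[OF f mom])
    have pm: "p \<in> borel_measurable I01" unfolding pa by (rule borel_I01) measurable
    have pb: "\<bar>h x - p x\<bar> < e" if "x \<in> {0..1}" for x unfolding p_def using N[OF order_refl that] .
    have "bounded (h ` {0..1})" by (rule compact_imp_bounded[OF compact_continuous_image[OF hc compact_Icc]])
    then obtain Bh where "\<forall>y\<in>h ` {0..1}. norm y \<le> Bh" unfolding bounded_iff by blast
    then have Bh: "\<And>x. x \<in> {0..1} \<Longrightarrow> \<bar>h x\<bar> \<le> Bh" by auto
    have ih: "integrable I01 (\<lambda>x. complex_of_real (h x) * f x)"
      by (rule bdd_mult_int[OF f _ , where B=Bh]) (use hm Bh in auto)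
    have ip: "integrable I01 (\<lambda>x. complex_of_real (p x) * f x)"
    proof (rule bdd_mult_int[OF f _ , where B="Bh + e"])
      show "(\<lambda>x. complex_of_real (p x)) \<in> borel_measurable I01" using pm by simp
      fix x :: real assume x: "x \<in> {0..1}"
      show "cmod (complex_of_real (p x)) \<le> Bh + e"
        using Bh[OF x] pb[OF x] by (auto simp: abs_le_iff abs_less_iff)
    qed
    have "integral\<^sup>L I01 (\<lambda>x. complex_of_real (h x) * f x)
        = integral\<^sup>L I01 (\<lambda>x. complex_of_real (h x) * f x - complex_of_real (p x) * f x)"
      using p0 ih ip by simp
    also have "cmod \<dots> \<le> integral\<^sup>L I01 (\<lambda>x. norm (complex_of_real (h x) * f x - complex_of_real (p x) * f x))"
      by (rule integral_norm_bound)
    also have "\<dots> \<le> integral\<^sup>L I01 (\<lambda>x. e * cmod (f x))"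
    proof (rule integral_mono)
      show "integrable I01 (\<lambda>x. norm (complex_of_real (h x) * f x - complex_of_real (p x) * f x))"
        using ih ip by auto
      show "integrable I01 (\<lambda>x. e * cmod (f x))" using f by auto
      fix x assume "x \<in> space I01"
      then have x: "x \<in> {0..1}" by simp
      have "norm (complex_of_real (h x) * f x - complex_of_real (p x) * f x) = \<bar>h x - p x\<bar> * cmod (f x)"
        by (simp add: left_diff_distrib[symmetric] norm_mult del: of_real_diff) (simp add: of_real_diff[symmetric] del: of_real_diff)
      also have "\<dots> \<le> e * cmod (f x)" using pb[OF x] by (intro mult_right_mono) auto
      finally show "norm (complex_of_real (h x) * f x - complex_of_real (p x) * f x) \<le> e * cmod (f x)" .
    qed
    also have "\<dots> = e * K" unfolding K_def by simp
    finally show ?thesis .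
  qed
  show ?thesis
  proof (rule ccontr)
    assume "integral\<^sup>L I01 (\<lambda>x. complex_of_real (h x) * f x) \<noteq> 0"
    then have c: "cmod (integral\<^sup>L I01 (\<lambda>x. complex_of_real (h x) * f x)) > 0" by simp
    define c where "c = cmod (integral\<^sup>L I01 (\<lambda>x. complex_of_real (h x) * f x))"
    have "c \<le> (c / (K + 1)) * K" using bound[of "c / (K + 1)"] c K unfolding c_def by simp
    also have "\<dots> < c" using c K unfolding c_def by (simp add: field_simps)
    finally show False by simp
  qed
qed

lemma cont_int:
  assumes f: "integrable I01 f" and h: "continuous_on UNIV h"
  shows "integrable I01 (\<lambda>x. complex_of_real (h x) * f x)"
proof -
  have hm: "h \<in> borel_measurable I01" by (rule borel_I01) (rule borel_measurable_continuous_onI[OF h])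
  have hc: "continuous_on {0..1} h" using h by (rule continuous_on_subset) simp
  have "bounded (h ` {0..1})" by (rule compact_imp_bounded[OF compact_continuous_image[OF hc compact_Icc]])
  then obtain Bh where "\<forall>y\<in>h ` {0..1}. norm y \<le> Bh" unfolding bounded_iff by blast
  then have Bh: "\<And>x. x \<in> {0..1} \<Longrightarrow> \<bar>h x\<bar> \<le> Bh" by auto
  show ?thesis by (rule bdd_mult_int[OF f _ , where B=Bh]) (use hm Bh in auto)
qed

lemma complete:
  assumes f: "L2 f" and orth: "\<And>n. l2_inner (e_fun n) f = 0"
  shows "AE x in I01. f x = 0"
proof -
  have fi: "integrable I01 f" using L2_integrable[OF f] .
  have mom: "\<And>n. integral\<^sup>L I01 (\<lambda>x. complex_of_real (x ^ n) * f x) = 0"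
    using moments_pow[OF f orth] .
  have re: "AE x in I01. Re (f x) = 0"
  proof (rule cont_orth_zero)
    show "integrable I01 (\<lambda>x. Re (f x))" using fi by simp
    fix h :: "real \<Rightarrow> real" assume h: "continuous_on UNIV h"
    have "integral\<^sup>L I01 (\<lambda>x. h x * Re (f x)) = integral\<^sup>L I01 (\<lambda>x. Re (complex_of_real (h x) * f x))"
      by simp
    also have "\<dots> = Re (integral\<^sup>L I01 (\<lambda>x. complex_of_real (h x) * f x))"
      by (rule Bochner_Integration.integral_Re[OF cont_int[OF fi h]])
    also have "\<dots> = 0" using cont_orth[OF fi mom h] by simp
    finally show "integral\<^sup>L I01 (\<lambda>x. h x * Re (f x)) = 0" .
  qed
  have im: "AE x in I01. Im (f x) = 0"
  proof (rule cont_orth_zero)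
    show "integrable I01 (\<lambda>x. Im (f x))" using fi by simp
    fix h :: "real \<Rightarrow> real" assume h: "continuous_on UNIV h"
    have "integral\<^sup>L I01 (\<lambda>x. h x * Im (f x)) = integral\<^sup>L I01 (\<lambda>x. Im (complex_of_real (h x) * f x))"
      by simp
    also have "\<dots> = Im (integral\<^sup>L I01 (\<lambda>x. complex_of_real (h x) * f x))"
      by (rule Bochner_Integration.integral_Im[OF cont_int[OF fi h]])
    also have "\<dots> = 0" using cont_orth[OF fi mom h] by simp
    finally show "integral\<^sup>L I01 (\<lambda>x. h x * Im (f x)) = 0" .
  qed
  from re im show ?thesis by eventually_elim (simp add: complex_eq_iff)
qed


lemma ip_sum2:
  assumes "finite A" "L2 g" "\<And>n. n \<in> A \<Longrightarrow> L2 (h n)"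
  shows "l2_inner g (\<lambda>x. \<Sum>n\<in>A. c n * h n x) = (\<Sum>n\<in>A. c n * l2_inner g (h n))"
  using assms
proof (induction A rule: finite_induct)
  case empty
  then show ?case using AE_zero_ip[of "\<lambda>x. 0" g] unfolding inner_iff by simp
next
  case (insert a A)
  have L: "L2 (\<lambda>x. \<Sum>n\<in>A. c n * h n x)" by (rule L2_sum) (use insert in auto)
  have "l2_inner g (\<lambda>x. \<Sum>n\<in>insert a A. c n * h n x) = l2_inner g (\<lambda>x. c a * h a x + 1 * (\<Sum>n\<in>A. c n * h n x))"
    using insert by simp
  also have "\<dots> = c a * l2_inner g (h a) + 1 * l2_inner g (\<lambda>x. \<Sum>n\<in>A. c n * h n x)"
    by (rule ip_lin2) (use insert L in auto)
  finally show ?case using insert by simp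
qed

lemma ip_sum1:
  assumes "finite A" "L2 g" "\<And>n. n \<in> A \<Longrightarrow> L2 (h n)"
  shows "l2_inner (\<lambda>x. \<Sum>n\<in>A. c n * h n x) g = (\<Sum>n\<in>A. cnj (c n) * l2_inner (h n) g)"
proof -
  have "l2_inner (\<lambda>x. \<Sum>n\<in>A. c n * h n x) g = cnj (l2_inner g (\<lambda>x. \<Sum>n\<in>A. c n * h n x))"
    by (rule ip_cnj)
  also have "\<dots> = cnj (\<Sum>n\<in>A. c n * l2_inner g (h n))" by (simp only: ip_sum2[OF assms])
  also have "\<dots> = (\<Sum>n\<in>A. cnj (c n) * l2_inner (h n) g)" by (simp add: ip_cnj[of g])
  finally show ?thesis .
qed

lemma sum_if_sub: "S \<subseteq> A \<Longrightarrow> finite A \<Longrightarrow> (\<Sum>k\<in>A. if k \<in> S then f k else 0) = sum f S"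
proof -
  assume a: "S \<subseteq> A" "finite A"
  have "(\<Sum>k\<in>A. if k \<in> S then f k else 0) = sum f (A \<inter> S)" by (rule sum.inter_restrict[OF a(2), symmetric])
  also have "A \<inter> S = S" using a(1) by auto
  finally show ?thesis .
qed

lemma nrm_efun: "l2_norm (e_fun n) = 1"
proof -
  have "complex_of_real ((l2_norm (e_fun n))^2) = 1" using ip_self[of "e_fun n"] efun_ortho[of n n] by simp
  then have "(l2_norm (e_fun n))^2 = 1" by (metis of_real_1 of_real_eq_iff)
  then show ?thesis using nrm_nonneg[of "e_fun n"] by (simp add: power2_eq_1_iff)
qed

abbreviation coef :: "nat \<Rightarrow> (real \<Rightarrow> complex) \<Rightarrow> complex" where
  "coef n f \<equiv> l2_inner (e_fun n) f"

definition comb :: "(nat \<Rightarrow> complex) \<Rightarrow> nat \<Rightarrow> real \<Rightarrow> complex" where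
  "comb c N x = (\<Sum>n<N. c n * e_fun n x)"

lemma L2_comb: "L2 (comb c N)"
  unfolding comb_def[abs_def] by (rule L2_sum) (auto intro: L2_efun)

lemma coef_comb: "coef m (comb c N) = (if m < N then c m else 0)"
proof -
  have "coef m (comb c N) = (\<Sum>n<N. c n * l2_inner (e_fun m) (e_fun n))"
    unfolding comb_def[abs_def] by (rule ip_sum2) (auto intro: L2_efun)
  also have "\<dots> = (\<Sum>n<N. if n = m then c n else 0)"
    by (intro sum.cong refl) (simp add: efun_ortho)
  also have "\<dots> = (if m < N then c m else 0)" by (simp add: sum.delta)
  finally show ?thesis .
qed

lemma nrm_comb: "(l2_norm (comb c N))^2 = (\<Sum>n<N. (cmod (c n))^2)"
proof -
  have "complex_of_real ((l2_norm (comb c N))^2) = l2_inner (comb c N) (comb c N)" by (simp add: ip_self)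
  also have "\<dots> = (\<Sum>n<N. cnj (c n) * coef n (comb c N))"
    by (subst (1) comb_def[abs_def], rule ip_sum1) (auto intro: L2_efun L2_comb)
  also have "\<dots> = (\<Sum>n<N. complex_of_real ((cmod (c n))^2))"
    by (intro sum.cong refl) (simp add: coef_comb cnj_mult_self)
  also have "\<dots> = complex_of_real (\<Sum>n<N. (cmod (c n))^2)" by simp
  finally show ?thesis by (simp only: of_real_eq_iff)
qed

lemma comb_diff: "N \<le> M \<Longrightarrow> (\<lambda>x. comb c M x - comb c N x) = comb (\<lambda>n. if N \<le> n then c n else 0) M"
proof -
  assume NM: "N \<le> M"
  have U: "{..<M} = {..<N} \<union> {N..<M}" using NM by auto
  have "comb c M x - comb c N x = (\<Sum>n\<in>{N..<M}. c n * e_fun n x)" for x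
  proof -
    have "comb c M x = comb c N x + (\<Sum>n\<in>{N..<M}. c n * e_fun n x)"
      unfolding comb_def by (subst U) (rule sum.union_disjoint, auto)
    then show ?thesis by simp
  qed
  moreover have "comb (\<lambda>n. if N \<le> n then c n else 0) M x = (\<Sum>n\<in>{N..<M}. c n * e_fun n x)" for x
  proof -
    have "comb (\<lambda>n. if N \<le> n then c n else 0) M x = (\<Sum>n<M. if n \<in> {N..<M} then c n * e_fun n x else 0)"
      unfolding comb_def by (intro sum.cong refl) auto
    also have "\<dots> = (\<Sum>n\<in>{N..<M}. c n * e_fun n x)"
      by (rule sum_if_sub) auto
    finally show ?thesis .
  qed
  ultimately show ?thesis by auto
qed

lemma comb_cauchy:
  assumes sm: "summable (\<lambda>n. (cmod (c n))^2)"
  shows "\<exists>g. L2 g \<and> (\<lambda>N. l2_norm (\<lambda>x. comb c N x - g x)) \<longlonglongrightarrow> 0"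
proof (rule RF)
  show "\<And>n. L2 (comb c n)" by (rule L2_comb)
  fix e :: real assume e: "e > 0"
  obtain N where N: "\<And>m n. N \<le> m \<Longrightarrow> norm (\<Sum>k=m..<n. (cmod (c k))^2) < e^2"
    using sm[unfolded summable_Cauchy] e by (meson zero_less_power)
  have "l2_norm (\<lambda>x. comb c m x - comb c n x) < e" if mn: "N \<le> n" "n \<le> m" for m n
  proof -
    have "(l2_norm (\<lambda>x. comb c m x - comb c n x))^2 = (\<Sum>k<m. (cmod (if n \<le> k then c k else 0))^2)"
      unfolding comb_diff[OF mn(2)] nrm_comb ..
    also have "\<dots> = (\<Sum>k=n..<m. (cmod (c k))^2)"
    proof -
      have "(\<Sum>k<m. (cmod (if n \<le> k then c k else 0))^2) = (\<Sum>k<m. if k \<in> {n..<m} then (cmod (c k))^2 else 0)"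
        by (intro sum.cong refl) auto
      also have "\<dots> = (\<Sum>k=n..<m. (cmod (c k))^2)"
        by (rule sum_if_sub) auto
      finally show ?thesis .
    qed
    also have "\<dots> < e^2" using N[OF mn(1), of m] by (simp add: sum_nonneg)
    finally show ?thesis using e nrm_nonneg by (meson power_less_imp_less_base less_imp_le)
  qed
  then show "\<exists>N. \<forall>m\<ge>N. \<forall>n\<ge>N. l2_norm (\<lambda>x. comb c m x - comb c n x) < e"
    by (metis nle_le nrm_diff_commute)
qed

lemma ip_limit:
  assumes "L2 h" "L2 g" "\<And>N. L2 (s N)" "(\<lambda>N. l2_norm (\<lambda>x. s N x - g x)) \<longlonglongrightarrow> 0"
  shows "(\<lambda>N. l2_inner h (s N)) \<longlonglongrightarrow> l2_inner h g"
proof -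
  have "(\<lambda>N. l2_norm h * l2_norm (\<lambda>x. s N x - g x)) \<longlonglongrightarrow> l2_norm h * 0"
    by (intro tendsto_intros assms(4))
  then have z: "(\<lambda>N. l2_norm h * l2_norm (\<lambda>x. s N x - g x)) \<longlonglongrightarrow> 0" by simp
  have "(\<lambda>N. l2_inner h (s N) - l2_inner h g) \<longlonglongrightarrow> 0"
  proof (rule tendsto_0_le[OF z, where K=1])
    show "\<forall>\<^sub>F N in sequentially. norm (l2_inner h (s N) - l2_inner h g) \<le> norm (l2_norm h * l2_norm (\<lambda>x. s N x - g x)) * 1"
      using ip_diff_bound[OF assms(3) assms(2) assms(1)] nrm_nonneg by (intro always_eventually allI) simp
  qed
  then show ?thesis by (simp add: LIM_zero_iff)
qed

lemma uniq:
  assumes f: "L2 f" and g: "L2 g" and c: "\<And>m. coef m f = coef m g"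
  shows "AE x in I01. f x = g x"
proof -
  have L: "L2 (\<lambda>x. 1 * f x + (-1) * g x)" using L2_lin[OF f g] .
  have "coef m (\<lambda>x. 1 * f x + (-1) * g x) = 0" for m
    using ip_lin2[OF L2_efun f g, where a=1 and b="-1"] c by simp
  then have "AE x in I01. 1 * f x + (-1) * g x = 0" by (rule complete[OF L])
  then show ?thesis by eventually_elim simp
qed

lemma bessel_eq:
  assumes f: "L2 f"
  shows "(l2_norm f)^2 = (l2_norm (\<lambda>x. f x - comb (\<lambda>n. coef n f) N x))^2 + (\<Sum>n<N. (cmod (coef n f))^2)"
proof -
  define a where "a n = coef n f" for n
  define g where "g x = f x - comb a N x" for x
  have Lc: "L2 (comb a N)" by (rule L2_comb)
  have Lg: "L2 g" unfolding g_def by (rule L2_diff[OF f Lc])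
  have cg: "coef m g = 0" if "m < N" for m
  proof -
    have "coef m g = 1 * coef m f + (-1) * coef m (comb a N)"
      using ip_lin2[OF L2_efun[of m] f Lc, where a=1 and b="-1"] unfolding g_def by simp
    then show ?thesis using that by (simp add: coef_comb a_def)
  qed
  have "l2_inner g (comb a N) = (\<Sum>n<N. a n * l2_inner g (e_fun n))"
    unfolding comb_def[abs_def] by (rule ip_sum2) (auto intro: Lg L2_efun)
  also have "\<dots> = 0" using cg by (simp add: ip_cnj[of g])
  finally have o: "l2_inner g (comb a N) = 0" .
  have fe: "f = (\<lambda>x. 1 * g x + 1 * comb a N x)" unfolding g_def by auto
  have "(l2_norm f)^2 = (l2_norm g)^2 + (l2_norm (comb a N))^2"
    using nrm_sq_expand[OF Lg Lc, of 1 1] o by (subst fe) simp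
  then show ?thesis unfolding nrm_comb g_def a_def .
qed

lemma bessel:
  assumes f: "L2 f"
  shows "(\<Sum>n<N. (cmod (coef n f))^2) \<le> (l2_norm f)^2"
  using bessel_eq[OF f, of N] by simp

lemma coef_summable: "L2 f \<Longrightarrow> summable (\<lambda>n. (cmod (coef n f))^2)"
  by (rule summableI_nonneg_bounded[where x="(l2_norm f)^2"]) (auto intro: bessel)

lemma comb_limit_coef:
  assumes sm: "summable (\<lambda>n. (cmod (c n))^2)"
  obtains g where "L2 g" "(\<lambda>N. l2_norm (\<lambda>x. comb c N x - g x)) \<longlonglongrightarrow> 0" "\<And>m. coef m g = c m"
proof -
  obtain g where g: "L2 g" "(\<lambda>N. l2_norm (\<lambda>x. comb c N x - g x)) \<longlonglongrightarrow> 0"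
    using comb_cauchy[OF sm] by blast
  have "coef m g = c m" for m
  proof -
    have "(\<lambda>N. coef m (comb c N)) \<longlonglongrightarrow> coef m g"
      by (rule ip_limit[OF L2_efun g(1) L2_comb g(2)])
    moreover have "(\<lambda>N. coef m (comb c N)) \<longlonglongrightarrow> c m"
    proof (rule tendsto_eventually)
      show "\<forall>\<^sub>F N in sequentially. coef m (comb c N) = c m"
        by (rule eventually_sequentiallyI[of "Suc m"]) (simp add: coef_comb)
    qed
    ultimately show ?thesis by (rule LIMSEQ_unique)
  qed
  with g show ?thesis using that by blast
qed

lemma expansion:
  assumes f: "L2 f"
  shows "(\<lambda>N. l2_norm (\<lambda>x. comb (\<lambda>n. coef n f) N x - f x)) \<longlonglongrightarrow> 0"
proof -
  obtain g where g: "L2 g" "(\<lambda>N. l2_norm (\<lambda>x. comb (\<lambda>n. coef n f) N x - g x)) \<longlonglongrightarrow> 0"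
      "\<And>m. coef m g = coef m f"
    using comb_limit_coef[OF coef_summable[OF f]] by blast
  have ae: "AE x in I01. g x = f x" by (rule uniq[OF g(1) f g(3)])
  have "l2_norm (\<lambda>x. comb (\<lambda>n. coef n f) N x - g x) = l2_norm (\<lambda>x. comb (\<lambda>n. coef n f) N x - f x)" for N
  proof (rule nrm_cong_AE)
    show "(\<lambda>x. comb (\<lambda>n. coef n f) N x - g x) \<in> borel_measurable I01"
      using L2_meas[OF L2_diff[OF L2_comb g(1)]] .
    show "(\<lambda>x. comb (\<lambda>n. coef n f) N x - f x) \<in> borel_measurable I01"
      using L2_meas[OF L2_diff[OF L2_comb f]] .
    show "AE x in I01. comb (\<lambda>n. coef n f) N x - g x = comb (\<lambda>n. coef n f) N x - f x"
      using ae by eventually_elim simp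
  qed
  then show ?thesis using g(2) by simp
qed

lemma parseval:
  assumes f: "L2 f" and g: "L2 g"
  shows "(\<lambda>N. \<Sum>n<N. cnj (coef n f) * coef n g) \<longlonglongrightarrow> l2_inner f g"
proof -
  have "(\<lambda>N. l2_inner g (comb (\<lambda>n. coef n f) N)) \<longlonglongrightarrow> l2_inner g f"
    by (rule ip_limit[OF g f L2_comb expansion[OF f]])
  then have "(\<lambda>N. cnj (l2_inner g (comb (\<lambda>n. coef n f) N))) \<longlonglongrightarrow> cnj (l2_inner g f)"
    by (rule tendsto_cnj)
  moreover have "cnj (l2_inner g (comb (\<lambda>n. coef n f) N)) = (\<Sum>n<N. cnj (coef n f) * coef n g)" for N
  proof -
    have "l2_inner g (comb (\<lambda>n. coef n f) N) = (\<Sum>n<N. coef n f * l2_inner g (e_fun n))"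
      unfolding comb_def[abs_def] by (rule ip_sum2) (auto intro: g L2_efun)
    then show ?thesis by (simp add: ip_cnj[of g])
  qed
  ultimately show ?thesis by (simp add: ip_cnj[of g f])
qed


lemma strip_facts:
  assumes s: "s \<in> strip_S"
  shows "Re s > -1/2" "1 + 2 * s \<noteq> 0" "s + 1 \<noteq> 0"
    "Re (- s / (1 + 2 * s)) > -1/2"
    "(1 / (1 + 2 * s)) * ((- s / (1 + 2 * s)) ^ m / (- s / (1 + 2 * s) + 1) ^ (m + 1)) = (-1) ^ m * (s ^ m / (s + 1) ^ (m + 1))"
proof -
  show s': "Re s > -1/2" using s unfolding strip_S_def by simp
  define w where "w = 1 + 2 * s"
  have rw: "Re w > 0" using s' unfolding w_def by simp
  show w0: "1 + 2 * s \<noteq> 0"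
  proof
    assume "1 + 2 * s = 0" then have "Re (1 + 2 * s) = 0" by simp
    then show False using rw unfolding w_def by simp
  qed
  have r1: "Re (s + 1) > 0" using s' by simp
  show s1: "s + 1 \<noteq> 0"
  proof
    assume "s + 1 = 0" then have "Re (s + 1) = 0" by simp
    then show False using r1 by simp
  qed
  have t: "- s / (1 + 2 * s) + 1 / 2 = 1 / (2 * w)"
    using w0 unfolding w_def by (simp add: divide_simps)
  have "Re (1 / (2 * w)) > 0"
    using rw by (simp add: Re_complex_div_gt_0)
  then have "Re (- s / (1 + 2 * s) + 1 / 2) > 0" unfolding t .
  then show "Re (- s / (1 + 2 * s)) > -1/2" by simp
  have t1: "- s / (1 + 2 * s) + 1 = (s + 1) / (1 + 2 * s)"
    using w0 by (simp add: field_simps)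
  have A: "(- s / (1 + 2 * s)) ^ m = (-1) ^ m * (s ^ m / (1 + 2 * s) ^ m)"
  proof -
    have "(- s / (1 + 2 * s)) ^ m = ((-1) * (s / (1 + 2 * s))) ^ m" by simp
    also have "\<dots> = (-1) ^ m * (s / (1 + 2 * s)) ^ m" by (rule power_mult_distrib)
    also have "\<dots> = (-1) ^ m * (s ^ m / (1 + 2 * s) ^ m)" by (simp add: power_divide)
    finally show ?thesis .
  qed
  have B: "((s + 1) / (1 + 2 * s)) ^ (m + 1) = (s + 1) ^ (m + 1) / ((1 + 2 * s) ^ m * (1 + 2 * s))"
    by (simp add: power_divide)
  have gen: "\<And>X P Q W (g::complex). W \<noteq> 0 \<Longrightarrow> P \<noteq> 0 \<Longrightarrow> Q \<noteq> 0 \<Longrightarrow>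
      (1 / W) * (g * (X / P) / (Q / (P * W))) = g * (X / Q)"
    by (simp add: field_simps)
  show "(1 / (1 + 2 * s)) * ((- s / (1 + 2 * s)) ^ m / (- s / (1 + 2 * s) + 1) ^ (m + 1)) = (-1) ^ m * (s ^ m / (s + 1) ^ (m + 1))"
    unfolding t1 A B by (rule gen) (use w0 s1 in auto)
qed

lemma neg1_sq: "((-1::complex) ^ n) * (-1) ^ n = 1"
  by (simp add: power_mult_distrib[symmetric])

lemma cnj_neg1: "cnj ((-1::complex) ^ n) = (-1) ^ n"
  by simp

lemma comb_Suc: "comb c (Suc N) = (\<lambda>x. 1 * comb c N x + c N * e_fun N x)"
  unfolding comb_def by (auto simp: fun_eq_iff)

lemma comb_0: "comb c 0 = (\<lambda>x. 0)"
  unfolding comb_def by (auto simp: fun_eq_iff)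

context
  fixes J :: "(real \<Rightarrow> complex) \<Rightarrow> real \<Rightarrow> complex"
  assumes Jb: "l2_bounded_op J"
    and Je: "\<forall>n. l2_eq (J (e_fun n)) (\<lambda>x. (-1) ^ n * e_fun n x)"
begin

lemma JL: "L2 f \<Longrightarrow> L2 (J f)"
  using Jb unfolding l2_bounded_op_def by blast

lemma Jlin: "L2 f \<Longrightarrow> L2 g \<Longrightarrow> AE x in I01. J (\<lambda>x. a * f x + b * g x) x = a * J f x + b * J g x"
  using Jb unfolding l2_bounded_op_def eq_iff by blast

lemma Jbound: obtains C where "\<And>f. L2 f \<Longrightarrow> l2_norm (J f) \<le> C * l2_norm f"
  using Jb unfolding l2_bounded_op_def by blast

lemma J_comb: "AE x in I01. J (comb c N) x = comb (\<lambda>n. (-1) ^ n * c n) N x"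
proof (induction N)
  case 0
  have "AE x in I01. J (\<lambda>x. 0 * 0 + 0 * 0) x = 0 * J (\<lambda>x. 0) x + 0 * J (\<lambda>x. 0) x"
    by (rule Jlin[OF L2_zero L2_zero])
  then show ?case by (simp add: comb_0)
next
  case (Suc N)
  have a: "AE x in I01. J (\<lambda>x. 1 * comb c N x + c N * e_fun N x) x = 1 * J (comb c N) x + c N * J (e_fun N) x"
    by (rule Jlin[OF L2_comb L2_efun])
  have b: "AE x in I01. J (e_fun N) x = (-1) ^ N * e_fun N x" using Je unfolding eq_iff by blast
  from a b Suc.IH show ?case
    by eventually_elim (simp add: comb_Suc)
qed

lemma J_coef: assumes f: "L2 f" shows "coef m (J f) = (-1) ^ m * coef m f"
proof -
  obtain C where C: "\<And>f. L2 f \<Longrightarrow> l2_norm (J f) \<le> C * l2_norm f" using Jbound by blast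
  define c where "c n = coef n f" for n
  define S where "S N = comb c N" for N
  have LS: "L2 (S N)" for N unfolding S_def by (rule L2_comb)
  have cS: "coef m (J (S N)) = (if m < N then (-1) ^ m * c m else 0)" for N
  proof -
    have "coef m (J (S N)) = coef m (comb (\<lambda>n. (-1) ^ n * c n) N)"
      unfolding S_def
      by (rule ip_cong_AE2[OF L2_meas[OF JL[OF L2_comb]] L2_meas[OF L2_comb] L2_meas[OF L2_efun] J_comb])
    then show ?thesis by (simp add: coef_comb)
  qed
  have est: "cmod (coef m (J f) - coef m (J (S N))) \<le> C * l2_norm (\<lambda>x. S N x - f x)" for N
  proof -
    have L1: "L2 (\<lambda>x. 1 * f x + (-1) * S N x)" by (rule L2_lin[OF f LS])
    have "cmod (coef m (J f) - coef m (J (S N))) \<le> l2_norm (e_fun m) * l2_norm (\<lambda>x. J f x - J (S N) x)"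
      by (rule ip_diff_bound[OF JL[OF f] JL[OF LS] L2_efun])
    also have "l2_norm (\<lambda>x. J f x - J (S N) x) = l2_norm (J (\<lambda>x. 1 * f x + (-1) * S N x))"
    proof (rule nrm_cong_AE)
      show "(\<lambda>x. J f x - J (S N) x) \<in> borel_measurable I01" using L2_meas[OF L2_diff[OF JL[OF f] JL[OF LS]]] .
      show "J (\<lambda>x. 1 * f x + (-1) * S N x) \<in> borel_measurable I01" using L2_meas[OF JL[OF L1]] .
      show "AE x in I01. J f x - J (S N) x = J (\<lambda>x. 1 * f x + (-1) * S N x) x"
        using Jlin[OF f LS[of N], of 1 "-1"] by eventually_elim simp
    qed
    also have "\<dots> \<le> C * l2_norm (\<lambda>x. 1 * f x + (-1) * S N x)" by (rule C[OF L1])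
    also have "l2_norm (\<lambda>x. 1 * f x + (-1) * S N x) = l2_norm (\<lambda>x. S N x - f x)"
      using nrm_diff_commute[of f "S N"] by simp
    finally show ?thesis using nrm_efun by simp
  qed
  have lim: "(\<lambda>N. C * l2_norm (\<lambda>x. S N x - f x)) \<longlonglongrightarrow> C * 0"
    unfolding S_def c_def by (intro tendsto_intros expansion[OF f])
  have "cmod (coef m (J f) - (-1) ^ m * coef m f) \<le> C * 0"
  proof (rule LIMSEQ_le_const[OF lim])
    show "\<exists>N. \<forall>n\<ge>N. cmod (coef m (J f) - (-1) ^ m * coef m f) \<le> C * l2_norm (\<lambda>x. S n x - f x)"
    proof (intro exI[of _ "Suc m"] allI impI)
      fix n assume n: "Suc m \<le> n"
      have "coef m (J (S n)) = (-1) ^ m * coef m f" using cS[of n] n by (simp add: c_def)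
      then show "cmod (coef m (J f) - (-1) ^ m * coef m f) \<le> C * l2_norm (\<lambda>x. S n x - f x)"
        using est[of n] by simp
    qed
  qed
  then show ?thesis by simp
qed

lemma J_inner: assumes f: "L2 f" and g: "L2 g" shows "l2_inner (J f) (J g) = l2_inner f g"
proof -
  have "(\<lambda>N. \<Sum>n<N. cnj (coef n (J f)) * coef n (J g)) \<longlonglongrightarrow> l2_inner (J f) (J g)"
    by (rule parseval[OF JL[OF f] JL[OF g]])
  moreover have "(\<lambda>N. \<Sum>n<N. cnj (coef n (J f)) * coef n (J g)) = (\<lambda>N. \<Sum>n<N. cnj (coef n f) * coef n g)"
    by (simp add: J_coef f g mult_ac neg1_sq)
  ultimately show ?thesis using parseval[OF f g] LIMSEQ_unique by metis
qed

lemma J_surj: assumes g: "L2 g" shows "L2 (J g) \<and> l2_eq (J (J g)) g"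
proof
  show "L2 (J g)" by (rule JL[OF g])
  have "coef m (J (J g)) = coef m g" for m
    by (simp add: J_coef JL g neg1_sq mult.assoc[symmetric])
  then show "l2_eq (J (J g)) g" unfolding eq_iff by (rule uniq[OF JL[OF JL[OF g]] g])
qed

lemma J_mon: assumes s: "s \<in> strip_S"
  shows "l2_eq (J (mon s)) (\<lambda>x. (1 / (1 + 2 * s)) * mon (- s / (1 + 2 * s)) x)"
proof -
  note sf = strip_facts[OF s]
  define \<tau> where "\<tau> = - s / (1 + 2 * s)"
  define c where "c = 1 / (1 + 2 * s)"
  have Ls: "L2 (mon s)" by (rule L2_mon[OF sf(1)])
  have Lt: "L2 (mon \<tau>)" unfolding \<tau>_def by (rule L2_mon[OF sf(4)])
  have Lr: "L2 (\<lambda>x. c * mon \<tau> x)" by (rule L2_cmult[OF Lt])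
  have "coef m (J (mon s)) = coef m (\<lambda>x. c * mon \<tau> x)" for m
  proof -
    have "coef m (\<lambda>x. c * mon \<tau> x + 0 * mon \<tau> x) = c * coef m (mon \<tau>) + 0 * coef m (mon \<tau>)"
      by (rule ip_lin2[OF L2_efun Lt Lt])
    then have "coef m (\<lambda>x. c * mon \<tau> x) = c * coef m (mon \<tau>)" by simp
    also have "\<dots> = c * (\<tau> ^ m / (\<tau> + 1) ^ (m + 1))"
      using efun_mon_coeff[of \<tau> m] sf(4) unfolding \<tau>_def by simp
    also have "\<dots> = (-1) ^ m * (s ^ m / (s + 1) ^ (m + 1))" unfolding c_def \<tau>_def by (rule sf(5))
    also have "\<dots> = coef m (J (mon s))"
      using J_coef[OF Ls, of m] efun_mon_coeff[of s m] sf(1) by simp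
    finally show ?thesis by simp
  qed
  then show ?thesis unfolding eq_iff c_def \<tau>_def
    using uniq[OF JL[OF Ls] Lr] unfolding c_def \<tau>_def by blast
qed

lemma J_monomial: "monomial_op J"
  unfolding monomial_op_def
proof (intro conjI ballI)
  show "l2_bounded_op J" by (rule Jb)
  fix s assume s: "s \<in> strip_S"
  show "\<exists>\<tau>\<in>strip_S. \<exists>c. l2_eq (J (mon s)) (\<lambda>x. c * mon \<tau> x)"
  proof (rule bexI[of _ "- s / (1 + 2 * s)"])
    show "\<exists>c. l2_eq (J (mon s)) (\<lambda>x. c * mon (- s / (1 + 2 * s)) x)"
      using J_mon[OF s] by blast
    show "- s / (1 + 2 * s) \<in> strip_S" using strip_facts(4)[OF s] unfolding strip_S_def by simp
  qed
qed

lemma J_unitary: "l2_unitary J"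
  unfolding l2_unitary_def using Jb J_inner J_surj by blast

end


definition J0 :: "(real \<Rightarrow> complex) \<Rightarrow> real \<Rightarrow> complex" where
  "J0 f = (if L2 f then (SOME g. L2 g \<and> (\<forall>m. coef m g = (-1) ^ m * coef m f)) else (\<lambda>x. 0))"

lemma J0_ex: assumes f: "L2 f" shows "\<exists>g. L2 g \<and> (\<forall>m. coef m g = (-1) ^ m * coef m f)"
proof -
  have "summable (\<lambda>n. (cmod ((-1) ^ n * coef n f))^2)"
    using coef_summable[OF f] by (simp add: norm_mult norm_power)
  then obtain g where "L2 g" "\<And>m. coef m g = (-1) ^ m * coef m f"
    by (rule comb_limit_coef) blast
  then show ?thesis by blast
qed

lemma J0_props: assumes f: "L2 f" shows "L2 (J0 f)" "\<And>m. coef m (J0 f) = (-1) ^ m * coef m f"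
proof -
  have "L2 (J0 f) \<and> (\<forall>m. coef m (J0 f) = (-1) ^ m * coef m f)"
    unfolding J0_def using f someI_ex[OF J0_ex[OF f]] by simp
  then show "L2 (J0 f)" "\<And>m. coef m (J0 f) = (-1) ^ m * coef m f" by auto
qed

lemma J0_norm: assumes f: "L2 f" shows "l2_norm (J0 f) = l2_norm f"
proof -
  have L: "L2 (J0 f)" using J0_props[OF f] by simp
  have "(\<lambda>N. \<Sum>n<N. cnj (coef n (J0 f)) * coef n (J0 f)) \<longlonglongrightarrow> l2_inner (J0 f) (J0 f)"
    by (rule parseval[OF L L])
  moreover have "(\<lambda>N. \<Sum>n<N. cnj (coef n (J0 f)) * coef n (J0 f)) = (\<lambda>N. \<Sum>n<N. cnj (coef n f) * coef n f)"
    by (simp add: J0_props(2)[OF f] mult_ac neg1_sq)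
  ultimately have "l2_inner (J0 f) (J0 f) = l2_inner f f"
    using parseval[OF f f] LIMSEQ_unique by metis
  then have "complex_of_real ((l2_norm (J0 f))^2) = complex_of_real ((l2_norm f)^2)" by (metis ip_self)
  then have "(l2_norm (J0 f))^2 = (l2_norm f)^2" by (simp only: of_real_eq_iff)
  then show ?thesis using nrm_nonneg by (simp add: power2_eq_iff_nonneg)
qed

lemma J0_bounded: "l2_bounded_op J0"
  unfolding l2_bounded_op_def
proof (intro conjI allI impI)
  fix f assume "L2 f" then show "L2 (J0 f)" by (rule J0_props)
next
  fix f g :: "real \<Rightarrow> complex" and a b :: complex assume f: "L2 f" and g: "L2 g"
  have L: "L2 (\<lambda>x. a * f x + b * g x)" by (rule L2_lin[OF f g])
  have L1: "L2 (J0 (\<lambda>x. a * f x + b * g x))" by (rule J0_props[OF L])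
  have L2': "L2 (\<lambda>x. a * J0 f x + b * J0 g x)" by (rule L2_lin[OF J0_props(1)[OF f] J0_props(1)[OF g]])
  have "coef m (J0 (\<lambda>x. a * f x + b * g x)) = coef m (\<lambda>x. a * J0 f x + b * J0 g x)" for m
    by (simp add: J0_props[OF L] ip_lin2[OF L2_efun f g] ip_lin2[OF L2_efun J0_props(1)[OF f] J0_props(1)[OF g]]
        J0_props(2)[OF f] J0_props(2)[OF g] algebra_simps)
  then show "l2_eq (J0 (\<lambda>x. a * f x + b * g x)) (\<lambda>x. a * J0 f x + b * J0 g x)"
    unfolding eq_iff by (rule uniq[OF L1 L2'])
next
  show "\<exists>C. \<forall>f. L2 f \<longrightarrow> l2_norm (J0 f) \<le> C * l2_norm f"
    by (rule exI[of _ 1]) (simp add: J0_norm)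
qed

lemma J0_efun: "l2_eq (J0 (e_fun n)) (\<lambda>x. (-1) ^ n * e_fun n x)"
proof -
  have L1: "L2 (J0 (e_fun n))" by (rule J0_props[OF L2_efun])
  have L2': "L2 (\<lambda>x. (-1) ^ n * e_fun n x)" by (rule L2_cmult[OF L2_efun])
  have "coef m (J0 (e_fun n)) = coef m (\<lambda>x. (-1) ^ n * e_fun n x)" for m
  proof -
    have "coef m (\<lambda>x. (-1) ^ n * e_fun n x + 0 * e_fun n x) = (-1) ^ n * coef m (e_fun n) + 0 * coef m (e_fun n)"
      by (rule ip_lin2[OF L2_efun L2_efun L2_efun])
    then show ?thesis by (simp add: J0_props(2)[OF L2_efun] efun_ortho)
  qed
  then show ?thesis unfolding eq_iff by (rule uniq[OF L1 L2'])
qed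

theorem theorem1p19:
  shows "l2_orthonormal_basis e_fun
    \<and> (\<exists>J. l2_bounded_op J \<and> (\<forall>n. l2_eq (J (e_fun n)) (\<lambda>x. (-1) ^ n * e_fun n x)))
    \<and> (\<forall>J. l2_bounded_op J \<and> (\<forall>n. l2_eq (J (e_fun n)) (\<lambda>x. (-1) ^ n * e_fun n x)) \<longrightarrow>
          l2_unitary J \<and> monomial_op J \<and>
          (\<forall>s\<in>strip_S. l2_eq (J (mon s))
               (\<lambda>x. (1 / (1 + 2 * s)) * mon (- s / (1 + 2 * s)) x)))"
proof (intro conjI allI impI)
  show "l2_orthonormal_basis e_fun"
    unfolding l2_orthonormal_basis_def
  proof (intro conjI allI impI)
    show "\<And>n. L2 (e_fun n)" by (rule L2_efun)
    show "\<And>m n. l2_inner (e_fun m) (e_fun n) = (if m = n then 1 else 0)" by (rule efun_ortho)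
    fix f :: "real \<Rightarrow> complex" and e :: real assume f: "L2 f" and e: "0 < e"
    obtain N where N: "\<And>n. n \<ge> N \<Longrightarrow> norm (l2_norm (\<lambda>x. comb (\<lambda>n. coef n f) n x - f x) - 0) < e"
      using LIMSEQ_D[OF expansion[OF f] e] by blast
    have "l2_norm (\<lambda>x. f x - (\<Sum>k<N. coef k f * e_fun k x)) < e"
      using N[of N] nrm_diff_commute[of "comb (\<lambda>n. coef n f) N" f] nrm_nonneg
      by (simp add: comb_def)
    then show "\<exists>N a. l2_norm (\<lambda>x. f x - (\<Sum>k<N. a k * e_fun k x)) < e"
      by (intro exI[of _ N] exI[of _ "\<lambda>k. coef k f"])
  qed
  show "\<exists>J. l2_bounded_op J \<and> (\<forall>n. l2_eq (J (e_fun n)) (\<lambda>x. (-1) ^ n * e_fun n x))"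
    using J0_bounded J0_efun by blast
next
  fix J assume "l2_bounded_op J \<and> (\<forall>n. l2_eq (J (e_fun n)) (\<lambda>x. (-1) ^ n * e_fun n x))"
  then have Jb: "l2_bounded_op J" and Je: "\<forall>n. l2_eq (J (e_fun n)) (\<lambda>x. (-1) ^ n * e_fun n x)" by auto
  show "l2_unitary J" by (rule J_unitary[OF Jb Je])
  show "monomial_op J" by (rule J_monomial[OF Jb Je])
  show "\<forall>s\<in>strip_S. l2_eq (J (mon s)) (\<lambda>x. (1 / (1 + 2 * s)) * mon (- s / (1 + 2 * s)) x)"
    using J_mon[OF Jb Je] by blast
qed


end
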